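(* Let $\varphi\colon V \to \left( F(r_L, r_Lr_P) \right)^{r_P}$ be the map sending $L \in V$ to $F_{\alpha_1}(L, r_Lr_P) \oplus \ldots \oplus F_{\alpha_{r_P}}(L, r_Lr_P)$. Then $\varphi$ is a surjective map of algebraic sets, and all fibers of $\varphi$ have the same dimension.
   Context: Let $C$ be a field of characteristic zero with algebraic closure $\bar C$, and $\partial x = x\partial+1$. Fix $P\in C[x,y]$ with $r_P=\deg_y P>1$ such that $P(0,y)$ is squarefree of degree $r_P$, and let $g_1,\ldots,g_{r_P}\in\bar C[[x]]$ be the power series roots of $P(x,y)=0$ at zero, with $\alpha_i = g_i(0)$ (these are distinct). Let $d_L\geq (r_Lr_P - r_L + 1)r_P$, and let $V$ be the set of all $L\in\bar C[x][\partial]$ of order $r_L$ and degree at most $d_L$ whose leading coefficient $\operatorname{lc}_\partial(L)$ does not vanish at $\alpha_1,\ldots,\alpha_{r_P}$. For an operator $L$ of order $r$ whose leading coefficient does not vanish at $\alpha$, and $d_1\geq r$, the fundamental matrix of degree $d_1$ at $\alpha$, $F_\alpha(L,d_1)$, is the $r\times(d_1+1)$ matrix whose first $r$ columns form the identity matrix $I_r$ and each of whose rows consists of the first $d_1+1$ coefficients (in powers of $x-\alpha$) of some power series solution of $L$ at $x=\alpha$. $F(r,d)$ denotes the space of all possible fundamental matrices of degree $d$ for operators of order $r$; it is isomorphic to the affine space $\mathbb{A}^{r(d+1-r)}$. *)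

theory Defs
  imports "HOL-Computational_Algebra.Computational_Algebra" "HOL-Library.Extended_Nat"
begin

definition affine_space :: "nat \<Rightarrow> 'a list set" where
  "affine_space n = {xs. length xs = n}"

inductive polyfun :: "nat \<Rightarrow> ('a::comm_ring_1 list \<Rightarrow> 'a) \<Rightarrow> bool" for n where
  pf_const: "polyfun n (\<lambda>_. c)"
| pf_var: "i < n \<Longrightarrow> polyfun n (\<lambda>xs. xs ! i)"
| pf_add: "polyfun n f \<Longrightarrow> polyfun n g \<Longrightarrow> polyfun n (\<lambda>xs. f xs + g xs)"
| pf_mult: "polyfun n f \<Longrightarrow> polyfun n g \<Longrightarrow> polyfun n (\<lambda>xs. f xs * g xs)"

definition zariski_closed :: "nat \<Rightarrow> 'a::comm_ring_1 list set \<Rightarrow> bool" where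
  "zariski_closed n S \<longleftrightarrow>
     (\<exists>F. (\<forall>f\<in>F. polyfun n f) \<and> S = {xs \<in> affine_space n. \<forall>f\<in>F. f xs = 0})"

definition zariski_open :: "nat \<Rightarrow> 'a::comm_ring_1 list set \<Rightarrow> bool" where
  "zariski_open n U \<longleftrightarrow> U \<subseteq> affine_space n \<and> zariski_closed n (affine_space n - U)"

definition closedin_Z :: "nat \<Rightarrow> 'a::comm_ring_1 list set \<Rightarrow> 'a list set \<Rightarrow> bool" where
  "closedin_Z n S Y \<longleftrightarrow> (\<exists>Z. zariski_closed n Z \<and> Y = S \<inter> Z)"

definition irreducible_closedin_Z :: "nat \<Rightarrow> 'a::comm_ring_1 list set \<Rightarrow> 'a list set \<Rightarrow> bool" where
  "irreducible_closedin_Z n S Y \<longleftrightarrow> closedin_Z n S Y \<and> Y \<noteq> {} \<and>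
     (\<forall>A B. closedin_Z n S A \<longrightarrow> closedin_Z n S B \<longrightarrow> Y \<subseteq> A \<union> B \<longrightarrow> Y \<subseteq> A \<or> Y \<subseteq> B)"

definition zdim :: "nat \<Rightarrow> 'a::comm_ring_1 list set \<Rightarrow> enat" where
  "zdim n S = Sup {enat k | k. \<exists>Y. (\<forall>i\<le>k. irreducible_closedin_Z n S (Y i)) \<and>
                                   (\<forall>i<k. Y i \<subset> Y (Suc i))}"

text \<open>A regular map (morphism) from X, embedded into A^n via c, to A^m: locally each
  coordinate is a quotient of polynomial functions with non-vanishing denominator.\<close>

definition regular_map ::
  "nat \<Rightarrow> nat \<Rightarrow> ('b \<Rightarrow> 'a::field list) \<Rightarrow> 'b set \<Rightarrow> ('b \<Rightarrow> 'a list) \<Rightarrow> bool" where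
  "regular_map n m c X h \<longleftrightarrow>
     inj_on c X \<and> c ` X \<subseteq> affine_space n \<and> h ` X \<subseteq> affine_space m \<and>
     (\<forall>x\<in>X. \<forall>k<m. \<exists>U p q. zariski_open n U \<and> c x \<in> U \<and> polyfun n p \<and> polyfun n q \<and>
        (\<forall>y\<in>X. c y \<in> U \<longrightarrow> q (c y) \<noteq> 0 \<and> h y ! k = p (c y) / q (c y)))"

definition is_subfield :: "'a::field set \<Rightarrow> bool" where
  "is_subfield C \<longleftrightarrow> 0 \<in> C \<and> 1 \<in> C \<and>
     (\<forall>a\<in>C. \<forall>b\<in>C. a + b \<in> C \<and> a - b \<in> C \<and> a * b \<in> C) \<and> (\<forall>a\<in>C. inverse a \<in> C)"

definition algebraic_over :: "'a::field set \<Rightarrow> bool" where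
  "algebraic_over C \<longleftrightarrow> (\<forall>z. \<exists>p. p \<noteq> 0 \<and> (\<forall>k. coeff p k \<in> C) \<and> poly p z = 0)"

text \<open>An operator L = \<Sum>_j l_j(x) \<partial>^j in \<bar>C[x][\<partial>] (normal form with coefficients on the left,
  \<partial>x = x\<partial> + 1) is represented by its coefficient function l :: nat \<Rightarrow> 'a poly.\<close>

definition op_order :: "(nat \<Rightarrow> 'a::zero poly) \<Rightarrow> nat \<Rightarrow> bool" where
  "op_order l r \<longleftrightarrow> l r \<noteq> 0 \<and> (\<forall>j>r. l j = 0)"

definition op_degree_le :: "(nat \<Rightarrow> 'a::zero poly) \<Rightarrow> nat \<Rightarrow> bool" where
  "op_degree_le l d \<longleftrightarrow> (\<forall>j. degree (l j) \<le> d)"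

text \<open>f (a power series in t = x - \<alpha>) is a solution of L (of order r) at x = \<alpha>.\<close>

definition op_solution_at ::
  "nat \<Rightarrow> (nat \<Rightarrow> 'a::field poly) \<Rightarrow> 'a \<Rightarrow> 'a fps \<Rightarrow> bool" where
  "op_solution_at r l \<alpha> f \<longleftrightarrow>
     (\<Sum>j\<le>r. fps_of_poly (pcompose (l j) [:\<alpha>, 1:]) * (fps_deriv ^^ j) f) = 0"

definition fmat_space :: "nat \<Rightarrow> nat \<Rightarrow> (nat \<Rightarrow> nat \<Rightarrow> 'a::zero_neq_one) set" where
  "fmat_space r d1 = {M. (\<forall>a<r. \<forall>b<r. M a b = (if a = b then 1 else 0)) \<and>
                         (\<forall>a b. (r \<le> a \<or> d1 < b) \<longrightarrow> M a b = 0)}"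

definition is_fundamental_matrix ::
  "nat \<Rightarrow> (nat \<Rightarrow> 'a::field poly) \<Rightarrow> 'a \<Rightarrow> nat \<Rightarrow> (nat \<Rightarrow> nat \<Rightarrow> 'a) \<Rightarrow> bool" where
  "is_fundamental_matrix r l \<alpha> d1 M \<longleftrightarrow> M \<in> fmat_space r d1 \<and>
     (\<forall>a<r. \<exists>f. op_solution_at r l \<alpha> f \<and> (\<forall>b\<le>d1. fps_nth f b = M a b))"

definition fundamental_matrix ::
  "nat \<Rightarrow> (nat \<Rightarrow> 'a::field poly) \<Rightarrow> 'a \<Rightarrow> nat \<Rightarrow> (nat \<Rightarrow> nat \<Rightarrow> 'a)" where
  "fundamental_matrix r l \<alpha> d1 = (THE M. is_fundamental_matrix r l \<alpha> d1 M)"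

text \<open>Tuples of s matrices (index i < s; zero outside), and their affine coordinates
  (the non-identity entries).\<close>

definition fmat_power :: "nat \<Rightarrow> nat \<Rightarrow> nat \<Rightarrow> (nat \<Rightarrow> nat \<Rightarrow> nat \<Rightarrow> 'a::zero_neq_one) set" where
  "fmat_power r d1 s = {Ms. (\<forall>i<s. Ms i \<in> fmat_space r d1) \<and> (\<forall>i\<ge>s. Ms i = (\<lambda>_ _. 0))}"

definition fmat_power_coords :: "nat \<Rightarrow> nat \<Rightarrow> nat \<Rightarrow> (nat \<Rightarrow> nat \<Rightarrow> nat \<Rightarrow> 'a) \<Rightarrow> 'a list" where
  "fmat_power_coords r d1 s Ms =
     concat (map (\<lambda>i. concat (map (\<lambda>a. map (\<lambda>b. Ms i a b) [r..<Suc d1]) [0..<r])) [0..<s])"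

definition op_coords :: "nat \<Rightarrow> nat \<Rightarrow> (nat \<Rightarrow> 'a::zero poly) \<Rightarrow> 'a list" where
  "op_coords r d l = concat (map (\<lambda>j. map (\<lambda>k. coeff (l j) k) [0..<Suc d]) [0..<Suc r])"

definition phi_map ::
  "nat \<Rightarrow> nat \<Rightarrow> (nat \<Rightarrow> 'a::field) \<Rightarrow> nat \<Rightarrow> (nat \<Rightarrow> 'a poly) \<Rightarrow> (nat \<Rightarrow> nat \<Rightarrow> nat \<Rightarrow> 'a)" where
  "phi_map r d1 \<alpha> s l = (\<lambda>i. if i < s then fundamental_matrix r l (\<alpha> i) d1 else (\<lambda>_ _. 0))"

text \<open>Evaluation P(x, h(x)) for P \<in> K[x][y] (outer variable y) and a power series h.\<close>

definition eval_bivar_fps :: "'a::comm_ring_1 poly poly \<Rightarrow> 'a fps \<Rightarrow> 'a fps" where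
  "eval_bivar_fps P h = (\<Sum>k\<le>degree P. fps_of_poly (coeff P k) * h ^ k)"

end

theory Submission
  imports Defs
begin

primrec seq_pre :: "(nat \<Rightarrow> (nat \<Rightarrow> 'b) \<Rightarrow> 'b) \<Rightarrow> nat \<Rightarrow> 'b list" where
  "seq_pre st 0 = []"
| "seq_pre st (Suc n) = seq_pre st n @ [st n (\<lambda>m. seq_pre st n ! m)]"
declare seq_pre.simps(2)[simp del]
lemma seq_pre_len[simp]: "length (seq_pre st n) = n"
  by (induction n) (auto simp: seq_pre.simps)
lemma seq_pre_Suc_nth: "m < k \<Longrightarrow> seq_pre st (Suc k) ! m = seq_pre st k ! m"
  by (simp only: seq_pre.simps nth_append seq_pre_len if_True)
lemma seq_pre_mono: "m < n \<Longrightarrow> n \<le> k \<Longrightarrow> seq_pre st k ! m = seq_pre st n ! m"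
proof (induction k)
  case 0 then show ?case by simp
next
  case (Suc k)
  show ?case
  proof (cases "n = Suc k")
    case True then show ?thesis by simp
  next
    case False
    then have "n \<le> k" using Suc by simp
    then have "seq_pre st k ! m = seq_pre st n ! m" using Suc.IH Suc.prems by blast
    moreover have "m < k" using \<open>n \<le> k\<close> Suc.prems by simp
    ultimately show ?thesis using seq_pre_Suc_nth by metis
  qed
qed
definition seq_rec :: "(nat \<Rightarrow> (nat \<Rightarrow> 'b) \<Rightarrow> 'b) \<Rightarrow> nat \<Rightarrow> 'b" where
  "seq_rec st n = seq_pre st (Suc n) ! n"

lemma seq_rec_eq:
  assumes dep: "\<And>n u v. (\<And>m. m < n \<Longrightarrow> u m = v m) \<Longrightarrow> st n u = st n v"
  shows "seq_rec st n = st n (seq_rec st)"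
proof -
  have "seq_rec st n = st n (\<lambda>m. seq_pre st n ! m)"
    unfolding seq_rec_def seq_pre.simps(2) by (simp only: nth_append seq_pre_len) simp
  also have "\<dots> = st n (seq_rec st)"
  proof (rule dep)
    fix m assume "m < n"
    then show "seq_pre st n ! m = seq_rec st m"
      unfolding seq_rec_def using seq_pre_mono[of m "Suc m" n st] by simp
  qed
  finally show ?thesis .
qed

lemma concat_map_upt_nth:
  assumes "\<And>i. i < t \<Longrightarrow> length (F i) = w" and "k < t * w"
  shows "concat (map F [0..<t]) ! k = F (k div w) ! (k mod w)"
  using assms
proof (induction t)
  case 0 then show ?case by simp
next
  case (Suc t)
  have len: "length (concat (map F [0..<t])) = t * w"
    using Suc.prems(1) by (induction t) (auto simp: length_concat)
  show ?case
  proof (cases "k < t * w")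
    case True
    then show ?thesis using Suc by (simp add: nth_append len)
  next
    case False
    then have w: "k - t*w < w" "w > 0" using Suc.prems(2) by (auto simp: algebra_simps)
    have "k div w = t"
    proof (rule div_nat_eqI)
      show "w * t \<le> k" using False by (simp add: mult.commute)
      show "k < w * Suc t" using Suc.prems(2) by (simp add: mult.commute)
    qed
    moreover have "k mod w = k - t * w"
      using \<open>k div w = t\<close> by (metis minus_div_mult_eq_mod mult.commute)
    ultimately show ?thesis using False by (simp add: nth_append len)
  qed
qed

lemma length_concat_map_upt:
  assumes "\<And>i. i < t \<Longrightarrow> length (F i) = w"
  shows "length (concat (map F [0..<t])) = t * w"
  using assms by (induction t) (auto simp: length_concat)

lemma pf_sum:
  assumes "finite A" "\<And>i. i \<in> A \<Longrightarrow> polyfun n (f i)"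
  shows "polyfun n (\<lambda>xs. \<Sum>i\<in>A. f i xs)"
  using assms
proof (induction A rule: finite_induct)
  case empty then show ?case by (simp add: pf_const)
next
  case (insert x F)
  then show ?case by (simp add: pf_add)
qed

lemma pf_compose:
  assumes "polyfun n f" "\<And>i. i < n \<Longrightarrow> polyfun m (\<lambda>xs. \<tau> xs ! i)"
  shows "polyfun m (\<lambda>xs. f (\<tau> xs))"
  using assms(1)
proof (induction rule: polyfun.induct)
  case (pf_const c) then show ?case by (rule polyfun.pf_const)
next
  case (pf_var i) then show ?case using assms(2) by simp
next
  case (pf_add f g) from pf_add.IH show ?case by (rule polyfun.pf_add)
next
  case (pf_mult f g) from pf_mult.IH show ?case by (rule polyfun.pf_mult)
qed

lemma pf_diff:
  assumes "polyfun n f" "polyfun n g"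
  shows "polyfun n (\<lambda>xs. f xs - (g xs :: 'a::comm_ring_1))"
proof -
  have "polyfun n (\<lambda>xs. f xs + (\<lambda>_. -1) xs * g xs)"
    by (intro pf_add pf_mult pf_const assms)
  then show ?thesis by simp
qed

section \<open>Rational functions on a set\<close>

definition ratfun :: "nat \<Rightarrow> ('b \<Rightarrow> 'a::field list) \<Rightarrow> 'b set \<Rightarrow> ('b \<Rightarrow> 'a) \<Rightarrow> bool" where
  "ratfun n c X h \<longleftrightarrow> (\<exists>p q. polyfun n p \<and> polyfun n q \<and>
      (\<forall>y\<in>X. q (c y) \<noteq> 0 \<and> h y = p (c y) / q (c y)))"

lemma rf_poly: "polyfun n p \<Longrightarrow> ratfun n c X (\<lambda>y. p (c y))"
  unfolding ratfun_def by (rule exI[of _ p], rule exI[of _ "\<lambda>_. 1"]) (auto intro: pf_const)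

lemma rf_const: "ratfun n c X (\<lambda>y. a)"
  unfolding ratfun_def by (rule exI[of _ "\<lambda>_. a"], rule exI[of _ "\<lambda>_. 1"]) (auto intro: pf_const)

lemma rf_var: "i < n \<Longrightarrow> ratfun n c X (\<lambda>y. c y ! i)"
  using rf_poly[OF pf_var[of i n]] by simp

lemma rf_add:
  assumes "ratfun n c X f" "ratfun n c X g"
  shows "ratfun n c X (\<lambda>y. f y + g y)"
proof -
  obtain p1 q1 where 1: "polyfun n p1" "polyfun n q1" "\<forall>y\<in>X. q1 (c y) \<noteq> 0 \<and> f y = p1 (c y) / q1 (c y)"
    using assms(1) unfolding ratfun_def by blast
  obtain p2 q2 where 2: "polyfun n p2" "polyfun n q2" "\<forall>y\<in>X. q2 (c y) \<noteq> 0 \<and> g y = p2 (c y) / q2 (c y)"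
    using assms(2) unfolding ratfun_def by blast
  show ?thesis unfolding ratfun_def
    apply (rule exI[of _ "\<lambda>xs. p1 xs * q2 xs + p2 xs * q1 xs"], rule exI[of _ "\<lambda>xs. q1 xs * q2 xs"])
    using 1 2 by (auto intro!: pf_add pf_mult simp: field_simps)
qed

lemma rf_mult:
  assumes "ratfun n c X f" "ratfun n c X g"
  shows "ratfun n c X (\<lambda>y. f y * g y)"
proof -
  obtain p1 q1 where 1: "polyfun n p1" "polyfun n q1" "\<forall>y\<in>X. q1 (c y) \<noteq> 0 \<and> f y = p1 (c y) / q1 (c y)"
    using assms(1) unfolding ratfun_def by blast
  obtain p2 q2 where 2: "polyfun n p2" "polyfun n q2" "\<forall>y\<in>X. q2 (c y) \<noteq> 0 \<and> g y = p2 (c y) / q2 (c y)"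
    using assms(2) unfolding ratfun_def by blast
  show ?thesis unfolding ratfun_def
    apply (rule exI[of _ "\<lambda>xs. p1 xs * p2 xs"], rule exI[of _ "\<lambda>xs. q1 xs * q2 xs"])
    using 1 2 by (auto intro!: pf_add pf_mult simp: field_simps)
qed

lemma rf_div:
  assumes "ratfun n c X f" "ratfun n c X g" "\<And>y. y \<in> X \<Longrightarrow> g y \<noteq> 0"
  shows "ratfun n c X (\<lambda>y. f y / g y)"
proof -
  obtain p1 q1 where 1: "polyfun n p1" "polyfun n q1" "\<forall>y\<in>X. q1 (c y) \<noteq> 0 \<and> f y = p1 (c y) / q1 (c y)"
    using assms(1) unfolding ratfun_def by blast
  obtain p2 q2 where 2: "polyfun n p2" "polyfun n q2" "\<forall>y\<in>X. q2 (c y) \<noteq> 0 \<and> g y = p2 (c y) / q2 (c y)"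
    using assms(2) unfolding ratfun_def by blast
  have nz: "\<forall>y\<in>X. p2 (c y) \<noteq> 0" using 2 assms(3) by fastforce
  show ?thesis unfolding ratfun_def
    apply (rule exI[of _ "\<lambda>xs. p1 xs * q2 xs"], rule exI[of _ "\<lambda>xs. q1 xs * p2 xs"])
    using 1 2 nz by (auto intro!: pf_add pf_mult simp: field_simps)
qed

lemma rf_diff:
  assumes "ratfun n c X f" "ratfun n c X g"
  shows "ratfun n c X (\<lambda>y. f y - g y)"
proof -
  have "ratfun n c X (\<lambda>y. f y + (\<lambda>_. -1) y * g y)"
    by (intro rf_add rf_mult rf_const assms)
  then show ?thesis by simp
qed

lemma rf_sum:
  assumes "finite A" "\<And>i. i \<in> A \<Longrightarrow> ratfun n c X (f i)"
  shows "ratfun n c X (\<lambda>y. \<Sum>i\<in>A. f i y)"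
  using assms
proof (induction A rule: finite_induct)
  case empty then show ?case by (simp add: rf_const)
next
  case (insert x F)
  then show ?case by (simp add: rf_add)
qed

lemma rf_cong: "ratfun n c X f \<Longrightarrow> (\<And>y. y \<in> X \<Longrightarrow> f y = g y) \<Longrightarrow> ratfun n c X g"
  unfolding ratfun_def by auto

section \<open>Dimension is invariant under polynomial automorphisms\<close>

lemma closedin_image:
  assumes A: "S \<subseteq> affine_space n" "\<And>xs. xs \<in> affine_space n \<Longrightarrow> \<tau> xs \<in> affine_space n"
      "\<And>xs. xs \<in> affine_space n \<Longrightarrow> \<rho> xs \<in> affine_space n"
      "\<And>xs. xs \<in> affine_space n \<Longrightarrow> \<rho> (\<tau> xs) = xs"
      "\<And>i. i < n \<Longrightarrow> polyfun n (\<lambda>xs. \<rho> xs ! i)"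
    and Y: "closedin_Z n S Y"
  shows "closedin_Z n (\<tau> ` S) (\<tau> ` Y)"
proof -
  obtain Z where Z: "zariski_closed n Z" "Y = S \<inter> Z" using Y unfolding closedin_Z_def by blast
  obtain F where F: "\<forall>f\<in>F. polyfun n f" "Z = {xs \<in> affine_space n. \<forall>f\<in>F. f xs = 0}"
    using Z(1) unfolding zariski_closed_def by blast
  define Z' where "Z' = {xs \<in> affine_space n. \<forall>f\<in>(\<lambda>f xs. f (\<rho> xs)) ` F. f xs = 0}"
  have "zariski_closed n Z'"
    unfolding zariski_closed_def Z'_def
    by (rule exI[of _ "(\<lambda>f xs. f (\<rho> xs)) ` F"]) (use F(1) A(5) in \<open>auto intro: pf_compose\<close>)
  moreover have "\<tau> ` Y = \<tau> ` S \<inter> Z'"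
  proof
    show "\<tau> ` Y \<subseteq> \<tau> ` S \<inter> Z'"
      using A Z(2) F(2) unfolding Z'_def by auto
    show "\<tau> ` S \<inter> Z' \<subseteq> \<tau> ` Y"
    proof
      fix y assume y: "y \<in> \<tau> ` S \<inter> Z'"
      then obtain x where x: "x \<in> S" "y = \<tau> x" by blast
      have "\<rho> y = x" using x A by auto
      then have "x \<in> Z" using y F(2) A(1) x(1) unfolding Z'_def by auto
      then show "y \<in> \<tau> ` Y" using x Z(2) by auto
    qed
  qed
  ultimately show ?thesis unfolding closedin_Z_def by blast
qed

lemma zdim_le_iso:
  assumes A: "S \<subseteq> affine_space n" "\<And>xs. xs \<in> affine_space n \<Longrightarrow> \<tau> xs \<in> affine_space n"
      "\<And>xs. xs \<in> affine_space n \<Longrightarrow> \<rho> xs \<in> affine_space n"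
      "\<And>xs. xs \<in> affine_space n \<Longrightarrow> \<rho> (\<tau> xs) = xs"
      "\<And>xs. xs \<in> affine_space n \<Longrightarrow> \<tau> (\<rho> xs) = xs"
      "\<And>i. i < n \<Longrightarrow> polyfun n (\<lambda>xs. \<rho> xs ! i)"
      "\<And>i. i < n \<Longrightarrow> polyfun n (\<lambda>xs. \<tau> xs ! i)"
  shows "zdim n S \<le> zdim n (\<tau> ` S)"
proof -
  have S': "\<tau> ` S \<subseteq> affine_space n" using A(1,2) by blast
  have bk: "\<rho> ` \<tau> ` S = S"
  proof -
    have "(\<lambda>x. \<rho> (\<tau> x)) ` S = (\<lambda>x. x) ` S"
      by (rule image_cong, rule refl, use A(1,4) in blast)
    then show ?thesis by (simp add: image_image)
  qed
  have cl_back: "closedin_Z n S (\<rho> ` B)" if "closedin_Z n (\<tau> ` S) B" for B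
    using closedin_image[of "\<tau> ` S" n \<rho> \<tau> B, OF S' A(3) A(2) A(5) A(7) that] bk by simp
  have irr: "irreducible_closedin_Z n (\<tau> ` S) (\<tau> ` Y)" if Y: "irreducible_closedin_Z n S Y" for Y
  proof -
    have Ycl: "closedin_Z n S Y" and Yne: "Y \<noteq> {}" using Y by (simp_all add: irreducible_closedin_Z_def)
    have YS: "Y \<subseteq> S" using Ycl unfolding closedin_Z_def by blast
    show ?thesis unfolding irreducible_closedin_Z_def
    proof (intro conjI allI impI)
      show "closedin_Z n (\<tau> ` S) (\<tau> ` Y)" by (rule closedin_image[OF A(1,2,3,4,6) Ycl])
      show "\<tau> ` Y \<noteq> {}" using Yne by simp
      fix B1 B2 assume B: "closedin_Z n (\<tau> ` S) B1" "closedin_Z n (\<tau> ` S) B2" "\<tau> ` Y \<subseteq> B1 \<union> B2"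
      have Bsub: "B1 \<subseteq> affine_space n" "B2 \<subseteq> affine_space n"
        using B(1,2) S' unfolding closedin_Z_def by blast+
      have "Y \<subseteq> \<rho> ` B1 \<union> \<rho> ` B2"
      proof
        fix y assume "y \<in> Y"
        have "\<tau> y \<in> B1 \<union> B2" using B(3) \<open>y \<in> Y\<close> by blast
        moreover have "\<rho> (\<tau> y) = y" using A(4) YS A(1) \<open>y \<in> Y\<close> by blast
        ultimately show "y \<in> \<rho> ` B1 \<union> \<rho> ` B2" by (metis UnE UnI1 UnI2 imageI)
      qed
      moreover have irrY: "\<forall>A B. closedin_Z n S A \<longrightarrow> closedin_Z n S B \<longrightarrow> Y \<subseteq> A \<union> B \<longrightarrow> Y \<subseteq> A \<or> Y \<subseteq> B"
        using Y unfolding irreducible_closedin_Z_def by (elim conjE)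
      ultimately have "Y \<subseteq> \<rho> ` B1 \<or> Y \<subseteq> \<rho> ` B2"
        using irrY[rule_format, OF cl_back[OF B(1)] cl_back[OF B(2)]] by simp
      moreover have "\<tau> ` \<rho> ` B1 = B1" "\<tau> ` \<rho> ` B2 = B2"
      proof -
        have "(\<lambda>x. \<tau> (\<rho> x)) ` B1 = (\<lambda>x. x) ` B1" "(\<lambda>x. \<tau> (\<rho> x)) ` B2 = (\<lambda>x. x) ` B2"
          by (rule image_cong, rule refl, use Bsub A(5) in blast)+
        then show "\<tau> ` \<rho> ` B1 = B1" "\<tau> ` \<rho> ` B2 = B2" by (simp_all add: image_image)
      qed
      ultimately show "\<tau> ` Y \<subseteq> B1 \<or> \<tau> ` Y \<subseteq> B2"
      proof (elim disjE)
        assume "Y \<subseteq> \<rho> ` B1" "\<tau> ` \<rho> ` B1 = B1"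
        then have "\<tau> ` Y \<subseteq> B1" using image_mono[of Y "\<rho> ` B1" \<tau>] by simp
        then show ?thesis ..
      next
        assume "Y \<subseteq> \<rho> ` B2" "\<tau> ` \<rho> ` B2 = B2"
        then have "\<tau> ` Y \<subseteq> B2" using image_mono[of Y "\<rho> ` B2" \<tau>] by simp
        then show ?thesis ..
      qed
    qed
  qed
  have inj: "inj_on \<tau> (affine_space n)" by (rule inj_onI) (metis A(4))
  have sub: "{enat k | k. \<exists>Y. (\<forall>i\<le>k. irreducible_closedin_Z n S (Y i)) \<and> (\<forall>i<k. Y i \<subset> Y (Suc i))}
      \<subseteq> {enat k | k. \<exists>Y. (\<forall>i\<le>k. irreducible_closedin_Z n (\<tau> ` S) (Y i)) \<and> (\<forall>i<k. Y i \<subset> Y (Suc i))}"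
  proof
    fix e assume "e \<in> {enat k | k. \<exists>Y. (\<forall>i\<le>k. irreducible_closedin_Z n S (Y i)) \<and> (\<forall>i<k. Y i \<subset> Y (Suc i))}"
    then obtain k Y where kY: "e = enat k" "\<forall>i\<le>k. irreducible_closedin_Z n S (Y i)" "\<forall>i<k. Y i \<subset> Y (Suc i)"
      by blast
    have YA: "Y i \<subseteq> affine_space n" if "i \<le> k" for i
    proof -
      have "closedin_Z n S (Y i)" using kY(2) that by (simp add: irreducible_closedin_Z_def)
      then show ?thesis using A(1) unfolding closedin_Z_def by blast
    qed
    have "\<forall>i\<le>k. irreducible_closedin_Z n (\<tau> ` S) (\<tau> ` Y i)" using kY(2) irr by blast
    moreover have "\<forall>i<k. \<tau> ` Y i \<subset> \<tau> ` Y (Suc i)"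
    proof (intro allI impI)
      fix i assume "i < k"
      then have "Y i \<subset> Y (Suc i)" "Y (Suc i) \<subseteq> affine_space n" using kY(3) YA[of "Suc i"] by simp_all
      then show "\<tau> ` Y i \<subset> \<tau> ` Y (Suc i)"
      proof -
        have "Y i \<subseteq> affine_space n" using \<open>Y i \<subset> Y (Suc i)\<close> \<open>Y (Suc i) \<subseteq> affine_space n\<close> by blast
        then have "\<tau> ` Y i \<noteq> \<tau> ` Y (Suc i)"
          using inj_on_image_eq_iff[OF inj] \<open>Y i \<subset> Y (Suc i)\<close> \<open>Y (Suc i) \<subseteq> affine_space n\<close> by blast
        then show ?thesis using \<open>Y i \<subset> Y (Suc i)\<close> by blast
      qed
    qed
    ultimately have "\<exists>Y. (\<forall>i\<le>k. irreducible_closedin_Z n (\<tau> ` S) (Y i)) \<and> (\<forall>i<k. Y i \<subset> Y (Suc i))"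
      by (intro exI[of _ "\<lambda>i. \<tau> ` Y i"]) simp
    then show "e \<in> {enat k | k. \<exists>Y. (\<forall>i\<le>k. irreducible_closedin_Z n (\<tau> ` S) (Y i)) \<and> (\<forall>i<k. Y i \<subset> Y (Suc i))}"
      using kY(1) by blast
  qed
  then show ?thesis unfolding zdim_def by (rule Sup_subset_mono)
qed

lemma zdim_iso:
  assumes A: "S \<subseteq> affine_space n" "\<And>xs. xs \<in> affine_space n \<Longrightarrow> \<tau> xs \<in> affine_space n"
      "\<And>xs. xs \<in> affine_space n \<Longrightarrow> \<rho> xs \<in> affine_space n"
      "\<And>xs. xs \<in> affine_space n \<Longrightarrow> \<rho> (\<tau> xs) = xs"
      "\<And>xs. xs \<in> affine_space n \<Longrightarrow> \<tau> (\<rho> xs) = xs"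
      "\<And>i. i < n \<Longrightarrow> polyfun n (\<lambda>xs. \<rho> xs ! i)"
      "\<And>i. i < n \<Longrightarrow> polyfun n (\<lambda>xs. \<tau> xs ! i)"
  shows "zdim n S = zdim n (\<tau> ` S)"
proof (rule antisym)
  show "zdim n S \<le> zdim n (\<tau> ` S)" by (rule zdim_le_iso[OF A])
  have S': "\<tau> ` S \<subseteq> affine_space n" using A by auto
  have bk: "\<rho> ` \<tau> ` S = S"
  proof -
    have "(\<lambda>x. \<rho> (\<tau> x)) ` S = (\<lambda>x. x) ` S"
      by (rule image_cong, rule refl, use A(1,4) in blast)
    then show ?thesis by (simp add: image_image)
  qed
  show "zdim n (\<tau> ` S) \<le> zdim n S"
    using zdim_le_iso[OF S' A(3) A(2) A(5) A(4) A(7) A(6)] bk by simp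
qed

section \<open>Linear differential operators on formal power series\<close>

definition Lop :: "nat \<Rightarrow> (nat \<Rightarrow> 'a::field_char_0 fps) \<Rightarrow> 'a fps \<Rightarrow> 'a fps" where
  "Lop r a f = (\<Sum>j\<le>r. a j * (fps_deriv ^^ j) f)"

lemma deriv_pow_nth:
  "((fps_deriv ^^ j) f) $ n = pochhammer (of_nat (n+1)) j * f $ (n+j)"
proof (induction j arbitrary: n)
  case 0 then show ?case by simp
next
  case (Suc j)
  have "((fps_deriv ^^ Suc j) f) $ n = of_nat (n+1) * ((fps_deriv ^^ j) f) $ (n+1)"
    by (simp add: fps_deriv_nth)
  also have "\<dots> = of_nat (n+1) * (pochhammer (of_nat (n+2)) j * f $ (n+1+j))"
    using Suc by simp
  also have "\<dots> = pochhammer (of_nat (n+1)) (Suc j) * f $ (n + Suc j)"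
    by (simp add: pochhammer_rec add_ac mult.assoc)
  finally show ?case .
qed

lemma poch_nz: "pochhammer (of_nat (n+1)) r \<noteq> (0::'a::field_char_0)"
proof
  assume "pochhammer (of_nat (n+1)) r = (0::'a)"
  then obtain k where "k < r" "(of_nat (n+1)::'a) = - of_nat k"
    by (auto simp: pochhammer_eq_0_iff)
  then have "(of_nat (n+1)::'a) + of_nat k = 0" by simp
  then have "(of_nat (n+1+k)::'a) = 0" by (simp only: of_nat_add)
  then show False by (simp only: of_nat_eq_0_iff)
qed

lemma sum_sum_split:
  assumes "finite A" "finite B" "j0 \<in> A" "k0 \<in> B"
  shows "(\<Sum>j\<in>A. \<Sum>k\<in>B. T j k) = T j0 k0 + (\<Sum>j\<in>A. \<Sum>k\<in>B. if j = j0 \<and> k = k0 then 0 else T j k)"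
proof -
  have "(\<Sum>j\<in>A. \<Sum>k\<in>B. T j k) =
        (\<Sum>j\<in>A. \<Sum>k\<in>B. (if j = j0 \<and> k = k0 then T j k else 0) + (if j = j0 \<and> k = k0 then 0 else T j k))"
    by (intro sum.cong refl) simp
  also have "\<dots> = (\<Sum>j\<in>A. \<Sum>k\<in>B. if j = j0 \<and> k = k0 then T j k else 0) +
                  (\<Sum>j\<in>A. \<Sum>k\<in>B. if j = j0 \<and> k = k0 then 0 else T j k)"
    by (simp add: sum.distrib)
  also have "(\<Sum>j\<in>A. \<Sum>k\<in>B. if j = j0 \<and> k = k0 then T j k else 0) =
             (\<Sum>j\<in>A. if j = j0 then T j0 k0 else 0)"
    by (intro sum.cong refl) (use assms in auto)
  also have "\<dots> = T j0 k0" using assms by simp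
  finally show ?thesis .
qed

definition rest :: "nat \<Rightarrow> (nat \<Rightarrow> 'a::field_char_0 fps) \<Rightarrow> 'a fps \<Rightarrow> nat \<Rightarrow> 'a" where
  "rest r a f n = (\<Sum>j\<le>r. \<Sum>k\<le>n. if j = r \<and> k = 0 then 0
       else a j $ k * (pochhammer (of_nat (n-k+1)) j * f $ (n-k+j)))"

lemma Lop_nth:
  "Lop r a f $ n = a r $ 0 * (pochhammer (of_nat (n+1)) r * f $ (n+r)) + rest r a f n"
proof -
  have "Lop r a f $ n = (\<Sum>j\<le>r. \<Sum>k\<le>n. a j $ k * ((fps_deriv ^^ j) f) $ (n - k))"
    unfolding Lop_def fps_sum_nth fps_mult_nth by (simp add: atLeast0AtMost)
  also have "\<dots> = (\<Sum>j\<le>r. \<Sum>k\<le>n. a j $ k * (pochhammer (of_nat (n-k+1)) j * f $ (n-k+j)))"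
    by (simp add: deriv_pow_nth)
  also have "\<dots> = a r $ 0 * (pochhammer (of_nat (n-0+1)) r * f $ (n-0+r)) + rest r a f n"
    unfolding rest_def by (rule sum_sum_split) auto
  finally show ?thesis by simp
qed

lemma rest_dep:
  assumes "\<And>m. m < n + r \<Longrightarrow> f $ m = h $ m"
  shows "rest r a f n = rest r a h n"
  unfolding rest_def
proof (intro sum.cong refl)
  fix j k assume jk: "j \<in> {..r}" "k \<in> {..n}"
  show "(if j = r \<and> k = 0 then 0 else a j $ k * (pochhammer (of_nat (n-k+1)) j * f $ (n-k+j))) =
        (if j = r \<and> k = 0 then 0 else a j $ k * (pochhammer (of_nat (n-k+1)) j * h $ (n-k+j)))"
  proof (cases "j = r \<and> k = 0")
    case False
    then have "n - k + j < n + r" using jk by auto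
    then show ?thesis using assms by simp
  qed simp
qed

lemma Lop_local:
  assumes "\<And>m. m \<le> n + r \<Longrightarrow> f $ m = h $ m"
  shows "Lop r a f $ n = Lop r a h $ n"
  unfolding Lop_nth using assms rest_dep[of n r f h a] by simp

lemma Lop_unique:
  assumes a0: "a r $ 0 \<noteq> 0"
    and L: "\<And>n. n < K \<Longrightarrow> Lop r a f $ n = Lop r a h $ n"
    and I: "\<And>m. m < r \<Longrightarrow> f $ m = h $ m"
  shows "m < K + r \<Longrightarrow> f $ m = h $ m"
proof (induction m rule: less_induct)
  case (less m)
  show ?case
  proof (cases "m < r")
    case True then show ?thesis using I by simp
  next
    case False
    define n where "n = m - r"
    have m: "m = n + r" "n < K" using False less.prems by (auto simp: n_def)
    have "rest r a f n = rest r a h n"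
      by (rule rest_dep) (use less.IH m in auto)
    then have "a r $ 0 * (pochhammer (of_nat (n+1)) r * f $ m) = a r $ 0 * (pochhammer (of_nat (n+1)) r * h $ m)"
      using L[OF m(2)] unfolding Lop_nth m(1) by simp
    moreover have "pochhammer (of_nat (n+1)) r \<noteq> (0::'a)" by (rule poch_nz)
    ultimately show ?thesis using a0 by simp
  qed
qed

definition sol :: "nat \<Rightarrow> (nat \<Rightarrow> 'a::field_char_0 fps) \<Rightarrow> (nat \<Rightarrow> 'a) \<Rightarrow> 'a fps" where
  "sol r a v = Abs_fps (seq_rec (\<lambda>m u. if m < r then v m
      else - rest r a (Abs_fps u) (m - r) / (a r $ 0 * pochhammer (of_nat (m - r + 1)) r)))"

lemma sol_nth:
  "sol r a v $ m = (if m < r then v m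
      else - rest r a (sol r a v) (m - r) / (a r $ 0 * pochhammer (of_nat (m - r + 1)) r))"
proof -
  let ?st = "(\<lambda>m u. if m < r then v m
      else - rest r a (Abs_fps u) (m - r) / (a r $ 0 * pochhammer (of_nat (m - r + 1)) r))"
  have "seq_rec ?st m = ?st m (seq_rec ?st)"
  proof (rule seq_rec_eq)
    fix n and u w :: "nat \<Rightarrow> 'a"
    assume "\<And>m. m < n \<Longrightarrow> u m = w m"
    then have "n \<ge> r \<Longrightarrow> rest r a (Abs_fps u) (n - r) = rest r a (Abs_fps w) (n - r)"
      by (intro rest_dep) auto
    then show "?st n u = ?st n w" by auto
  qed
  then show ?thesis unfolding sol_def by simp
qed

lemma sol_Lop:
  assumes "a r $ 0 \<noteq> 0"
  shows "Lop r a (sol r a v) = 0"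
proof (rule fps_ext)
  fix n
  have "sol r a v $ (n + r) = - rest r a (sol r a v) n / (a r $ 0 * pochhammer (of_nat (n + 1)) r)"
    by (subst sol_nth) simp
  moreover have "pochhammer (of_nat (n+1)) r \<noteq> (0::'a)" by (rule poch_nz)
  ultimately show "Lop r a (sol r a v) $ n = 0 $ n"
    unfolding Lop_nth using assms by (simp add: field_simps)
qed

lemma sol_init: "m < r \<Longrightarrow> sol r a v $ m = v m"
  by (subst sol_nth) simp

definition opfps :: "(nat \<Rightarrow> 'a::field_char_0 poly) \<Rightarrow> 'a \<Rightarrow> nat \<Rightarrow> 'a fps" where
  "opfps l \<alpha> j = fps_of_poly (pcompose (l j) [:\<alpha>, 1:])"

lemma opfps_0: "opfps l \<alpha> j $ 0 = poly (l j) \<alpha>"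
  by (simp add: opfps_def)

lemma op_solution_at_Lop: "op_solution_at r l \<alpha> f \<longleftrightarrow> Lop r (opfps l \<alpha>) f = 0"
  by (simp add: op_solution_at_def Lop_def opfps_def)

definition evec :: "nat \<Rightarrow> nat \<Rightarrow> 'a::zero_neq_one" where
  "evec i m = (if m = i then 1 else 0)"

definition fm_cand :: "nat \<Rightarrow> (nat \<Rightarrow> 'a::field_char_0 fps) \<Rightarrow> nat \<Rightarrow> nat \<Rightarrow> nat \<Rightarrow> 'a" where
  "fm_cand r a d1 = (\<lambda>i b. if i < r \<and> b \<le> d1 then sol r a (evec i) $ b else 0)"

definition trunc_row :: "nat \<Rightarrow> (nat \<Rightarrow> nat \<Rightarrow> 'a::zero) \<Rightarrow> nat \<Rightarrow> 'a fps" where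
  "trunc_row d1 M i = Abs_fps (\<lambda>b. if b \<le> d1 then M i b else 0)"

lemma fm_cand_is:
  fixes l :: "nat \<Rightarrow> 'a::field_char_0 poly"
  assumes "poly (l r) \<alpha> \<noteq> 0" "r \<le> Suc d1"
  shows "is_fundamental_matrix r l \<alpha> d1 (fm_cand r (opfps l \<alpha>) d1)"
  unfolding is_fundamental_matrix_def
proof (intro conjI allI impI)
  show "fm_cand r (opfps l \<alpha>) d1 \<in> fmat_space r d1"
    unfolding fmat_space_def fm_cand_def using assms(2) by (auto simp: sol_init evec_def)
  fix i assume "i < r"
  show "\<exists>f. op_solution_at r l \<alpha> f \<and> (\<forall>b\<le>d1. f $ b = fm_cand r (opfps l \<alpha>) d1 i b)"
    by (rule exI[of _ "sol r (opfps l \<alpha>) (evec i)"])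
       (use assms \<open>i < r\<close> in \<open>simp add: op_solution_at_Lop sol_Lop opfps_0 fm_cand_def\<close>)
qed

lemma fm_is_cand:
  fixes l :: "nat \<Rightarrow> 'a::field_char_0 poly"
  assumes "poly (l r) \<alpha> \<noteq> 0" "r \<le> Suc d1" "is_fundamental_matrix r l \<alpha> d1 M"
  shows "M = fm_cand r (opfps l \<alpha>) d1"
proof (intro ext)
  fix i b
  have Ms: "M \<in> fmat_space r d1" using assms(3) unfolding is_fundamental_matrix_def by simp
  show "M i b = fm_cand r (opfps l \<alpha>) d1 i b"
  proof (cases "i < r \<and> b \<le> d1")
    case False
    then show ?thesis using Ms unfolding fmat_space_def fm_cand_def by auto
  next
    case True
    then obtain f where f: "op_solution_at r l \<alpha> f" "\<forall>b\<le>d1. f $ b = M i b"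
      using assms(3) unfolding is_fundamental_matrix_def by blast
    have a0: "opfps l \<alpha> r $ 0 \<noteq> 0" using assms(1) by (simp add: opfps_0)
    have "f $ b = sol r (opfps l \<alpha>) (evec i) $ b"
    proof (rule Lop_unique[of "opfps l \<alpha>" r, OF a0, where K = "Suc b"])
      show "Lop r (opfps l \<alpha>) f $ n = Lop r (opfps l \<alpha>) (sol r (opfps l \<alpha>) (evec i)) $ n" for n
        using f(1) sol_Lop[of "opfps l \<alpha>" r, OF a0] by (simp add: op_solution_at_Lop)
      show "f $ m = sol r (opfps l \<alpha>) (evec i) $ m" if "m < r" for m
        using that f(2) Ms assms(2) True by (auto simp: sol_init fmat_space_def evec_def)
    qed simp
    then show ?thesis using f(2) True by (simp add: fm_cand_def)
  qed
qed

lemma fundamental_matrix_eq: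
  fixes l :: "nat \<Rightarrow> 'a::field_char_0 poly"
  assumes "poly (l r) \<alpha> \<noteq> 0" "r \<le> Suc d1"
  shows "fundamental_matrix r l \<alpha> d1 = fm_cand r (opfps l \<alpha>) d1"
  unfolding fundamental_matrix_def
  by (rule the_equality, rule fm_cand_is[of l r \<alpha> d1, OF assms], rule fm_is_cand[of l r \<alpha> d1, OF assms])

lemma fundamental_matrix_in:
  fixes l :: "nat \<Rightarrow> 'a::field_char_0 poly"
  assumes "poly (l r) \<alpha> \<noteq> 0" "r \<le> Suc d1"
  shows "fundamental_matrix r l \<alpha> d1 \<in> fmat_space r d1"
proof -
  have "is_fundamental_matrix r l \<alpha> d1 (fm_cand r (opfps l \<alpha>) d1)" by (rule fm_cand_is[of l r \<alpha> d1, OF assms])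
  then have "fm_cand r (opfps l \<alpha>) d1 \<in> fmat_space r d1" unfolding is_fundamental_matrix_def by (elim conjE)
  then show ?thesis unfolding fundamental_matrix_eq[of l r \<alpha> d1, OF assms] .
qed

lemma fundamental_matrix_char:
  fixes l :: "nat \<Rightarrow> 'a::field_char_0 poly"
  assumes nz: "poly (l r) \<alpha> \<noteq> 0" and rd: "r \<le> Suc d1" and M: "M \<in> fmat_space r d1"
  shows "fundamental_matrix r l \<alpha> d1 = M \<longleftrightarrow>
    (\<forall>i<r. \<forall>n. n + r \<le> d1 \<longrightarrow> Lop r (opfps l \<alpha>) (trunc_row d1 M i) $ n = 0)"
proof -
  have a0: "opfps l \<alpha> r $ 0 \<noteq> 0" using nz by (simp add: opfps_0)
  let ?a = "opfps l \<alpha>"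
  show ?thesis unfolding fundamental_matrix_eq[of l r \<alpha> d1, OF nz rd]
  proof
    assume eq: "fm_cand r ?a d1 = M"
    show "\<forall>i<r. \<forall>n. n + r \<le> d1 \<longrightarrow> Lop r ?a (trunc_row d1 M i) $ n = 0"
    proof (intro allI impI)
      fix i n assume i: "i < r" and n: "n + r \<le> d1"
      have "Lop r ?a (trunc_row d1 M i) $ n = Lop r ?a (sol r ?a (evec i)) $ n"
        by (rule Lop_local) (use n i in \<open>auto simp: trunc_row_def eq[symmetric] fm_cand_def\<close>)
      then show "Lop r ?a (trunc_row d1 M i) $ n = 0" using sol_Lop[of "opfps l \<alpha>" r, OF a0] by simp
    qed
  next
    assume L: "\<forall>i<r. \<forall>n. n + r \<le> d1 \<longrightarrow> Lop r ?a (trunc_row d1 M i) $ n = 0"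
    show "fm_cand r ?a d1 = M"
    proof (intro ext)
      fix i b
      show "fm_cand r ?a d1 i b = M i b"
      proof (cases "i < r \<and> b \<le> d1")
        case False
        then show ?thesis using M unfolding fmat_space_def fm_cand_def by auto
      next
        case True
        have "trunc_row d1 M i $ b = sol r ?a (evec i) $ b"
        proof (rule Lop_unique[of "opfps l \<alpha>" r, OF a0, where K = "Suc d1 - r"])
          show "Lop r ?a (trunc_row d1 M i) $ n = Lop r ?a (sol r ?a (evec i)) $ n" if "n < Suc d1 - r" for n
            using L True that sol_Lop[of "opfps l \<alpha>" r, OF a0] by auto
          show "trunc_row d1 M i $ m = sol r ?a (evec i) $ m" if "m < r" for m
            using that M rd True by (auto simp: sol_init fmat_space_def evec_def trunc_row_def)
          show "b < Suc d1 - r + r" using True rd by simp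
        qed
        then show ?thesis using True by (simp add: fm_cand_def trunc_row_def)
      qed
    qed
  qed
qed

lemma fps_mult_nth_split:
  "(f * g) $ n = f $ n * g $ 0 + (\<Sum>k<n. f $ k * g $ (n - k))"
  unfolding fps_mult_nth atLeast0AtMost lessThan_Suc_atMost[symmetric] sum.lessThan_Suc by (simp add: add.commute)

lemma D0:
  assumes "p $ j = evec i j"
  shows "((fps_deriv ^^ j) p) $ 0 = (if j = i then fact i else (0::'a::field_char_0))"
  using assms by (simp add: deriv_pow_nth pochhammer_fact evec_def)

lemma sum_D0:
  assumes "i < r" "\<And>j. j < r \<Longrightarrow> p $ j = evec i j"
  shows "(\<Sum>j<r. (e j :: 'a::field_char_0 fps) $ n * ((fps_deriv ^^ j) p) $ 0) = e i $ n * fact i"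
proof -
  have "(\<Sum>j<r. e j $ n * ((fps_deriv ^^ j) p) $ 0) = (\<Sum>j<r. if j = i then e i $ n * fact i else 0)"
    by (intro sum.cong refl) (simp add: D0 assms)
  also have "\<dots> = e i $ n * fact i" using assms(1) by simp
  finally show ?thesis .
qed

lemma sum_ops_nth:
  "(\<Sum>j<r. (e j :: 'a::field_char_0 fps) * (fps_deriv ^^ j) p) $ n =
     (\<Sum>j<r. e j $ n * ((fps_deriv ^^ j) p) $ 0) + (\<Sum>j<r. \<Sum>k<n. e j $ k * ((fps_deriv ^^ j) p) $ (n - k))"
  by (simp add: fps_sum_nth fps_mult_nth_split sum.distrib)

text \<open>Triangularity: the rows p i start with the identity matrix.\<close>

lemma tri_zero:
  assumes P: "\<And>i j. i < r \<Longrightarrow> j < r \<Longrightarrow> p i $ j = evec i j"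
    and Z: "\<And>i n. i < r \<Longrightarrow> n < K \<Longrightarrow> (\<Sum>j<r. (\<delta> j :: 'a::field_char_0 fps) * (fps_deriv ^^ j) (p i)) $ n = 0"
  shows "j < r \<Longrightarrow> n < K \<Longrightarrow> \<delta> j $ n = 0"
proof (induction n arbitrary: j rule: less_induct)
  case (less n)
  have "(\<Sum>j<r. \<delta> j * (fps_deriv ^^ j) (p j')) $ n = \<delta> j' $ n * fact j'" if "j' < r" for j'
  proof -
    have "(\<Sum>j<r. \<Sum>k<n. \<delta> j $ k * ((fps_deriv ^^ j) (p j')) $ (n - k)) = 0"
      using less by (intro sum.neutral ballI) (auto intro!: sum.neutral)
    then show ?thesis unfolding sum_ops_nth using sum_D0[of j' r "p j'" \<delta> n] P that by simp
  qed
  then have "\<delta> j $ n * fact j = 0" using Z[OF less.prems] less.prems by simp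
  then show ?case by simp
qed

text \<open>Solving for the lower coefficients with leading coefficient 1.\<close>

definition esol_step :: "nat \<Rightarrow> (nat \<Rightarrow> 'a fps) \<Rightarrow> nat \<Rightarrow> (nat \<Rightarrow> nat \<Rightarrow> 'a) \<Rightarrow> nat \<Rightarrow> 'a::field_char_0" where
  "esol_step r p n u i = (if i < r then
      - (((fps_deriv ^^ r) (p i)) $ n + (\<Sum>j<r. \<Sum>k<n. u k j * ((fps_deriv ^^ j) (p i)) $ (n - k))) / fact i
     else 0)"

definition esol :: "nat \<Rightarrow> (nat \<Rightarrow> 'a::field_char_0 fps) \<Rightarrow> nat \<Rightarrow> 'a fps" where
  "esol r p j = Abs_fps (\<lambda>k. seq_rec (esol_step r p) k j)"

lemma esol_nth: "esol r p i $ n = esol_step r p n (\<lambda>k j. esol r p j $ k) i"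
proof -
  have "seq_rec (esol_step r p) n = esol_step r p n (seq_rec (esol_step r p))"
  proof (rule seq_rec_eq)
    fix n and u w :: "nat \<Rightarrow> nat \<Rightarrow> 'a"
    assume "\<And>m. m < n \<Longrightarrow> u m = w m"
    then show "esol_step r p n u = esol_step r p n w"
    proof (intro ext)
      fix i
      have "(\<Sum>j<r. \<Sum>k<n. u k j * ((fps_deriv ^^ j) (p i)) $ (n - k)) =
            (\<Sum>j<r. \<Sum>k<n. w k j * ((fps_deriv ^^ j) (p i)) $ (n - k))"
        by (intro sum.cong refl) (simp add: \<open>\<And>m. m < n \<Longrightarrow> u m = w m\<close>)
      then show "esol_step r p n u i = esol_step r p n w i" unfolding esol_step_def by simp
    qed
  qed
  then show ?thesis unfolding esol_def by simp
qed

lemma esol_eq: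
  assumes P: "\<And>i j. i < r \<Longrightarrow> j < r \<Longrightarrow> p i $ j = evec i j" and i: "i < r"
  shows "(\<Sum>j<r. esol r p j * (fps_deriv ^^ j) (p i)) + (fps_deriv ^^ r) (p i) = 0"
proof (rule fps_ext)
  fix n
  have "(\<Sum>j<r. esol r p j * (fps_deriv ^^ j) (p i)) $ n =
        esol r p i $ n * fact i + (\<Sum>j<r. \<Sum>k<n. esol r p j $ k * ((fps_deriv ^^ j) (p i)) $ (n - k))"
    unfolding sum_ops_nth using sum_D0[of i r "p i" "esol r p" n] P i by simp
  moreover have "esol r p i $ n * fact i = - (((fps_deriv ^^ r) (p i)) $ n +
      (\<Sum>j<r. \<Sum>k<n. esol r p j $ k * ((fps_deriv ^^ j) (p i)) $ (n - k)))"
    by (subst esol_nth) (simp add: esol_step_def i)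
  ultimately show "((\<Sum>j<r. esol r p j * (fps_deriv ^^ j) (p i)) + (fps_deriv ^^ r) (p i)) $ n = 0 $ n"
    by simp
qed

lemma pcompose_power: "pcompose (p ^ n) q = (pcompose p q) ^ n"
  by (induction n) (simp_all add: pcompose_1 pcompose_mult)

lemma pcompose_shift_back:
  "pcompose (pcompose h [:\<alpha>, 1:]) [:- \<alpha>, 1:] = (h :: 'a::comm_ring_1 poly)"
proof -
  have "pcompose [:\<alpha>, 1:] [:- \<alpha>, 1:] = [:0, 1:]" by (simp add: pcompose_pCons)
  then show ?thesis by (simp add: pcompose_assoc[symmetric])
qed

lemma pcompose_shift_fwd:
  "pcompose (pcompose h [:- \<alpha>, 1:]) [:\<alpha>, 1:] = (h :: 'a::comm_ring_1 poly)"
  using pcompose_shift_back[of h "- \<alpha>"] by simp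

lemma shift_dvd:
  "(\<forall>n<N. coeff (pcompose h [:\<alpha>, 1:]) n = 0) \<longleftrightarrow> [:- \<alpha>, 1:] ^ N dvd (h :: 'a::field poly)"
proof
  assume "\<forall>n<N. coeff (pcompose h [:\<alpha>, 1:]) n = 0"
  then have "monom 1 N dvd pcompose h [:\<alpha>, 1:]" by (simp add: monom_1_dvd_iff')
  then obtain w where w: "pcompose h [:\<alpha>, 1:] = monom 1 N * w" by (elim dvdE)
  have "h = pcompose (monom 1 N * w) [:- \<alpha>, 1:]" using w pcompose_shift_back[of h \<alpha>] by simp
  also have "\<dots> = [:- \<alpha>, 1:] ^ N * pcompose w [:- \<alpha>, 1:]"
    by (simp add: pcompose_mult monom_altdef pcompose_power pcompose_pCons)
  finally show "[:- \<alpha>, 1:] ^ N dvd h" by (metis dvd_triv_left)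
next
  assume "[:- \<alpha>, 1:] ^ N dvd h"
  then obtain w where w: "h = [:- \<alpha>, 1:] ^ N * w" by (elim dvdE)
  have "pcompose h [:\<alpha>, 1:] = monom 1 N * pcompose w [:\<alpha>, 1:]"
    by (simp add: w pcompose_mult monom_altdef pcompose_power pcompose_pCons)
  then have "monom 1 N dvd pcompose h [:\<alpha>, 1:]" by simp
  then show "\<forall>n<N. coeff (pcompose h [:\<alpha>, 1:]) n = 0" by (simp add: monom_1_dvd_iff')
qed

lemma coprime_lin:
  fixes a b :: "'a::field"
  assumes "a \<noteq> b"
  shows "coprime [:- a, 1:] [:- b, 1:]"
proof (rule coprimeI)
  fix c assume "c dvd [:- a, 1:]" "c dvd [:- b, 1:]"
  then have "c dvd [:- a, 1:] - [:- b, 1:]" by (rule dvd_diff)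
  moreover have "[:- a, 1:] - [:- b, 1:] = [:b - a:]" by simp
  moreover have "is_unit [:b - a:]" using assms by (simp add: is_unit_poly_iff dvd_field_iff)
  ultimately show "is_unit c" by (metis dvd_unit_imp_unit)
qed

lemma fps_mult_trunc:
  assumes "\<And>k. k \<le> n \<Longrightarrow> f $ k = f' $ k"
  shows "(f * g) $ n = (f' * g) $ n"
  unfolding fps_mult_nth using assms by (intro sum.cong refl) auto

lemma inv_mod_lin:
  fixes Pr :: "'a::field poly"
  assumes "poly Pr \<beta> \<noteq> 0"
  shows "\<exists>u. [:- \<beta>, 1:] ^ N dvd (u * Pr - 1)"
proof -
  define \<pi> where "\<pi> = fps_of_poly (pcompose Pr [:\<beta>, 1:])"
  have p0: "\<pi> $ 0 \<noteq> 0" using assms by (simp add: \<pi>_def)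
  define \<iota> where "\<iota> = inverse \<pi>"
  have ip: "\<iota> * \<pi> = 1" unfolding \<iota>_def using p0 by (rule inverse_mult_eq_1)
  define W where "W = (\<Sum>n<N. monom (\<iota> $ n) n)"
  have W: "coeff W k = \<iota> $ k" if "k < N" for k using that by (simp add: W_def coeff_sum)
  define u where "u = pcompose W [:- \<beta>, 1:]"
  have "\<forall>n<N. coeff (pcompose (u * Pr - 1) [:\<beta>, 1:]) n = 0"
  proof (intro allI impI)
    fix n assume n: "n < N"
    have "pcompose (u * Pr - 1) [:\<beta>, 1:] = W * pcompose Pr [:\<beta>, 1:] - 1"
      by (simp add: u_def pcompose_diff pcompose_mult pcompose_1 pcompose_shift_fwd)
    then have "coeff (pcompose (u * Pr - 1) [:\<beta>, 1:]) n = (fps_of_poly W * \<pi>) $ n - (1::'a fps) $ n"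
      by (simp add: \<pi>_def fps_of_poly_mult[symmetric] del: fps_of_poly_mult)
    also have "(fps_of_poly W * \<pi>) $ n = (\<iota> * \<pi>) $ n"
      by (rule fps_mult_trunc) (use n W in auto)
    finally show "coeff (pcompose (u * Pr - 1) [:\<beta>, 1:]) n = 0" using ip by simp
  qed
  then show ?thesis using shift_dvd by blast
qed

lemma crt_lin:
  fixes \<alpha> :: "nat \<Rightarrow> 'a::field"
  assumes "inj_on \<alpha> {..<s}"
  shows "\<exists>q. \<forall>i<s. [:- \<alpha> i, 1:] ^ N dvd (q - T i)"
  using assms
proof (induction s)
  case 0 then show ?case by simp
next
  case (Suc s)
  then obtain q where q: "\<forall>i<s. [:- \<alpha> i, 1:] ^ N dvd (q - T i)"
    using inj_on_subset[of \<alpha> "{..<Suc s}" "{..<s}"] by auto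
  define Pr where "Pr = (\<Prod>i<s. [:- \<alpha> i, 1:] ^ N)"
  have "poly Pr (\<alpha> s) = (\<Prod>i<s. (\<alpha> s - \<alpha> i) ^ N)" unfolding Pr_def by (simp add: poly_prod)
  moreover have "\<alpha> s - \<alpha> i \<noteq> 0" if "i < s" for i
    using Suc.prems that by (auto dest: inj_onD)
  ultimately have "poly Pr (\<alpha> s) \<noteq> 0" by simp
  then obtain u where uv: "[:- \<alpha> s, 1:] ^ N dvd (u * Pr - 1)" using inv_mod_lin by blast
  define q' where "q' = q + u * Pr * (T s - q)"
  have "[:- \<alpha> i, 1:] ^ N dvd (q' - T i)" if "i < Suc s" for i
  proof (cases "i = s")
    case True
    have "q' - T i = (u * Pr - 1) * (T s - q)"
      unfolding q'_def True by (simp add: algebra_simps)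
    then show ?thesis using uv True by (simp add: dvd_mult2)
  next
    case False
    then have i: "i < s" using that by simp
    have "[:- \<alpha> i, 1:] ^ N dvd Pr" unfolding Pr_def using i by (intro dvd_prodI) auto
    then have "[:- \<alpha> i, 1:] ^ N dvd u * Pr * (T s - q)" by (simp add: dvd_mult2 dvd_mult)
    then have "[:- \<alpha> i, 1:] ^ N dvd (q - T i) + u * Pr * (T s - q)"
      using q i by (intro dvd_add) auto
    then show ?thesis unfolding q'_def by (simp add: algebra_simps)
  qed
  then show ?case by blast
qed

lemma degree_lin_prod:
  "degree (\<Prod>i<s. [:- (\<alpha> i :: 'a::field), 1:] ^ N) = s * N"
  by (subst degree_prod_eq_sum_degree) (auto simp: degree_power_eq)

lemma crt_lin_deg:
  fixes \<alpha> :: "nat \<Rightarrow> 'a::field"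
  assumes "inj_on \<alpha> {..<s}" "0 < s * N"
  shows "\<exists>q. (\<forall>i<s. [:- \<alpha> i, 1:] ^ N dvd (q - T i)) \<and> degree q < s * N"
proof -
  obtain q where q: "\<forall>i<s. [:- \<alpha> i, 1:] ^ N dvd (q - T i)" using crt_lin[OF assms(1)] by blast
  define Pr where "Pr = (\<Prod>i<s. [:- \<alpha> i, 1:] ^ N)"
  have Pr0: "Pr \<noteq> 0" unfolding Pr_def by auto
  have dP: "degree Pr = s * N" unfolding Pr_def by (rule degree_lin_prod)
  have "[:- \<alpha> i, 1:] ^ N dvd (q mod Pr - T i)" if "i < s" for i
  proof -
    have "[:- \<alpha> i, 1:] ^ N dvd Pr" unfolding Pr_def using that by (intro dvd_prodI) auto
    have "[:- \<alpha> i, 1:] ^ N dvd (q - T i) - Pr * (q div Pr)"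
    proof (rule dvd_diff)
      show "[:- \<alpha> i, 1:] ^ N dvd q - T i" using q that by blast
      show "[:- \<alpha> i, 1:] ^ N dvd Pr * (q div Pr)" using \<open>[:- \<alpha> i, 1:] ^ N dvd Pr\<close> by (rule dvd_mult2)
    qed
    moreover have "q mod Pr = q - Pr * (q div Pr)" by (rule minus_mult_div_eq_mod[symmetric])
    then have e2: "q mod Pr - T i = (q - T i) - Pr * (q div Pr)" by (simp add: algebra_simps)
    ultimately show ?thesis by (simp only: e2)
  qed
  moreover have "degree (q mod Pr) < s * N"
    using degree_mod_less[OF Pr0, of q] dP assms(2) by auto
  ultimately show ?thesis by blast
qed

lemma hermite:
  fixes \<alpha> :: "nat \<Rightarrow> 'a::field_char_0" and E :: "nat \<Rightarrow> 'a fps"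
  assumes "inj_on \<alpha> {..<s}" "0 < s * N"
  shows "\<exists>q. (\<forall>i<s. \<forall>n<N. coeff (pcompose q [:\<alpha> i, 1:]) n = E i $ n) \<and> degree q < s * N"
proof -
  define T where "T i = pcompose (\<Sum>n<N. monom (E i $ n) n) [:- \<alpha> i, 1:]" for i
  obtain q where q: "\<forall>i<s. [:- \<alpha> i, 1:] ^ N dvd (q - T i)" "degree q < s * N"
    using crt_lin_deg[OF assms, of T] by blast
  have "coeff (pcompose q [:\<alpha> i, 1:]) n = E i $ n" if "i < s" "n < N" for i n
  proof -
    have "\<forall>n<N. coeff (pcompose (q - T i) [:\<alpha> i, 1:]) n = 0"
      using q(1) that(1) shift_dvd by blast
    then have "coeff (pcompose q [:\<alpha> i, 1:]) n = coeff (pcompose (T i) [:\<alpha> i, 1:]) n"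
      using that(2) by (simp add: pcompose_diff)
    also have "\<dots> = coeff (\<Sum>n<N. monom (E i $ n) n) n"
      unfolding T_def pcompose_shift_fwd ..
    also have "\<dots> = E i $ n" using that(2) by (simp add: coeff_sum)
    finally show ?thesis .
  qed
  then show ?thesis using q(2) by blast
qed

definition Vset :: "nat \<Rightarrow> nat \<Rightarrow> (nat \<Rightarrow> 'a::field_char_0) \<Rightarrow> nat \<Rightarrow> (nat \<Rightarrow> 'a poly) set" where
  "Vset r d \<alpha> s = {l. op_order l r \<and> op_degree_le l d \<and> (\<forall>i<s. poly (l r) (\<alpha> i) \<noteq> 0)}"

lemma Lop_split: "Lop r a f = (\<Sum>j<r. a j * (fps_deriv ^^ j) f) + a r * (fps_deriv ^^ r) f"
  unfolding Lop_def lessThan_Suc_atMost[symmetric] sum.lessThan_Suc ..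

lemma trunc_row_evec:
  assumes "M \<in> fmat_space r d1" "r \<le> Suc d1" "i < r" "j < r"
  shows "trunc_row d1 M i $ j = evec i j"
  using assms by (auto simp: trunc_row_def fmat_space_def evec_def)

lemma surj_construct:
  fixes \<alpha> :: "nat \<Rightarrow> 'a::field_char_0"
  assumes inj: "inj_on \<alpha> {..<s}" and Ms: "Ms \<in> fmat_power r (r * s) s"
    and sN: "s * (Suc (r * s) - r) \<le> d" and s0: "0 < s"
  shows "\<exists>l\<in>Vset r d \<alpha> s. l r = 1 \<and> phi_map r (r * s) \<alpha> s l = Ms"
proof -
  define d1 where "d1 = r * s"
  define N where "N = Suc d1 - r"
  have rs: "r * 1 \<le> r * s" using s0 by (intro mult_le_mono2) simp
  have rd: "r \<le> Suc d1" using rs unfolding d1_def by linarith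
  have "r < Suc (r * s)" using rs by linarith
  then have N0: "0 < s * N" using s0 unfolding N_def d1_def by simp
  have Ms': "(\<forall>i<s. Ms i \<in> fmat_space r d1) \<and> (\<forall>i\<ge>s. Ms i = (\<lambda>_ _. 0))"
    using Ms unfolding fmat_power_def d1_def by (rule CollectD)
  have Msi: "Ms i \<in> fmat_space r d1" if "i < s" for i
    using Ms' that by simp
  have Msz: "Ms i = (\<lambda>_ _. 0)" if "\<not> i < s" for i
    using Ms' that by simp
  define p where "p i = trunc_row d1 (Ms i)" for i
  define e where "e i = esol r (p i)" for i
  have "\<forall>j. \<exists>q. (\<forall>i<s. \<forall>n<N. coeff (pcompose q [:\<alpha> i, 1:]) n = e i j $ n) \<and> degree q < s * N"
    by (rule allI, rule hermite[OF inj N0])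
  from choice[OF this] obtain Q where Q0: "\<forall>j. (\<forall>i<s. \<forall>n<N. coeff (pcompose (Q j) [:\<alpha> i, 1:]) n = e i j $ n) \<and> degree (Q j) < s * N"
    by blast
  have Q: "\<And>j i n. i < s \<Longrightarrow> n < N \<Longrightarrow> coeff (pcompose (Q j) [:\<alpha> i, 1:]) n = e i j $ n"
      "\<And>j. degree (Q j) < s * N"
    using Q0 by blast+
  have sNd: "s * N \<le> d" using sN unfolding N_def d1_def .
  define l where "l j = (if j < r then Q j else if j = r then 1 else 0)" for j
  have lV: "l \<in> Vset r d \<alpha> s"
    unfolding Vset_def op_order_def op_degree_le_def
  proof (intro CollectI conjI allI impI)
    show "l r \<noteq> 0" by (simp add: l_def)
    fix j
    show "degree (l j) \<le> d" by (cases "j < r") (use Q(2)[of j] sNd in \<open>simp_all add: l_def\<close>)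
  qed (auto simp: l_def)
  have "phi_map r d1 \<alpha> s l = Ms"
  proof (rule ext)
    fix i show "phi_map r d1 \<alpha> s l i = Ms i"
    proof (cases "i < s")
      case False then show ?thesis using Msz by (simp add: phi_map_def)
    next
      case True
      have nz: "poly (l r) (\<alpha> i) \<noteq> 0" by (simp add: l_def)
      have "fundamental_matrix r l (\<alpha> i) d1 = Ms i"
        unfolding fundamental_matrix_char[of l r "\<alpha> i" d1, OF nz rd Msi[OF True]]
      proof (intro allI impI)
        fix a n assume a: "a < r" and n: "n + r \<le> d1"
        have P: "\<And>a' j. a' < r \<Longrightarrow> j < r \<Longrightarrow> p i a' $ j = evec a' j"
          unfolding p_def using trunc_row_evec[OF Msi[OF True] rd] by blast
        have nN: "n < N" using n by (simp add: N_def)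
        have "Lop r (opfps l (\<alpha> i)) (p i a) $ n =
              ((\<Sum>j<r. opfps l (\<alpha> i) j * (fps_deriv ^^ j) (p i a)) + (fps_deriv ^^ r) (p i a)) $ n"
          unfolding Lop_split by (simp add: opfps_def l_def pcompose_1)
        also have "\<dots> = ((\<Sum>j<r. e i j * (fps_deriv ^^ j) (p i a)) + (fps_deriv ^^ r) (p i a)) $ n"
        proof -
          have "(opfps l (\<alpha> i) j * (fps_deriv ^^ j) (p i a)) $ n = (e i j * (fps_deriv ^^ j) (p i a)) $ n"
            if "j < r" for j
            by (rule fps_mult_trunc) (use that Q(1)[OF True] nN in \<open>auto simp: opfps_def l_def\<close>)
          then show ?thesis by (simp add: fps_sum_nth)
        qed
        also have "\<dots> = 0" using esol_eq[OF P a] unfolding e_def by simp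
        finally show "Lop r (opfps l (\<alpha> i)) (trunc_row d1 (Ms i) a) $ n = 0" by (simp add: p_def)
      qed
      then show ?thesis using True by (simp add: phi_map_def)
    qed
  qed
  then show ?thesis using lV unfolding d1_def by (intro bexI[of _ l]) (simp_all add: l_def)
qed

lemma opfps_diff_mult:
  "opfps (\<lambda>j. l j - l r * E j) \<alpha> j = opfps l \<alpha> j - opfps l \<alpha> r * opfps E \<alpha> j"
  by (simp add: opfps_def pcompose_diff pcompose_mult fps_of_poly_diff fps_of_poly_mult)

lemma Lop_decomp:
  assumes "e r = 1"
  shows "Lop r a f = (\<Sum>j<r. (a j - a r * e j) * (fps_deriv ^^ j) f) + a r * Lop r e f"
proof -
  have "(\<Sum>j<r. (a j - a r * e j) * (fps_deriv ^^ j) f) + a r * Lop r e f =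
        (\<Sum>j<r. a j * (fps_deriv ^^ j) f) - (\<Sum>j<r. a r * (e j * (fps_deriv ^^ j) f))
        + ((\<Sum>j<r. a r * (e j * (fps_deriv ^^ j) f)) + a r * (fps_deriv ^^ r) f)"
    unfolding Lop_split[of r e] assms
    by (simp add: sum_subtractf algebra_simps sum_distrib_left)
  also have "\<dots> = Lop r a f" unfolding Lop_split[of r a] by simp
  finally show ?thesis by simp
qed

lemma mult_low_zero:
  fixes X :: "'a::field_char_0 fps"
  assumes "\<And>k. k \<le> n \<Longrightarrow> X $ k = 0"
  shows "(c * X) $ n = 0"
  unfolding fps_mult_nth using assms by (intro sum.neutral) auto

lemma sum_ops_low_zero:
  assumes "\<And>j k. j < r \<Longrightarrow> k \<le> n \<Longrightarrow> \<delta> j $ k = 0"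
  shows "(\<Sum>j<r. \<delta> j * (fps_deriv ^^ j) (f::'a::field_char_0 fps)) $ n = 0"
  unfolding fps_sum_nth fps_mult_nth using assms by (intro sum.neutral ballI) auto

lemma fm_fiber_local:
  fixes l E :: "nat \<Rightarrow> 'a::field_char_0 poly"
  assumes nzl: "poly (l r) \<alpha> \<noteq> 0" and E1: "E r = 1" and rd: "r \<le> Suc d1"
    and M: "M \<in> fmat_space r d1" and FE: "fundamental_matrix r E \<alpha> d1 = M"
  shows "fundamental_matrix r l \<alpha> d1 = M \<longleftrightarrow>
    (\<forall>j<r. [:- \<alpha>, 1:] ^ (Suc d1 - r) dvd (l j - l r * E j))"
proof -
  let ?N = "Suc d1 - r"
  let ?a = "opfps l \<alpha>" and ?e = "opfps E \<alpha>"
  define p where "p = trunc_row d1 M"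
  define \<delta> where "\<delta> j = opfps (\<lambda>j. l j - l r * E j) \<alpha> j" for j
  have nzE: "poly (E r) \<alpha> \<noteq> 0" using E1 by simp
  have e1: "?e r = 1" using E1 by (simp add: opfps_def pcompose_1)
  have EL: "\<forall>i<r. \<forall>n. n + r \<le> d1 \<longrightarrow> Lop r ?e (p i) $ n = 0"
    using FE fundamental_matrix_char[of E r \<alpha> d1 M, OF nzE rd M] unfolding p_def by blast
  have P: "\<And>i j. i < r \<Longrightarrow> j < r \<Longrightarrow> p i $ j = evec i j"
    unfolding p_def using trunc_row_evec[OF M rd] by blast
  have nN: "n + r \<le> d1 \<longleftrightarrow> n < ?N" for n using rd by auto
  have eq: "Lop r ?a (p i) $ n = (\<Sum>j<r. \<delta> j * (fps_deriv ^^ j) (p i)) $ n"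
    if "i < r" "n < ?N" for i n
  proof -
    have "(?a r * Lop r ?e (p i)) $ n = 0"
      by (rule mult_low_zero) (use EL that nN in auto)
    then show ?thesis
      unfolding Lop_decomp[of ?e r ?a "p i", OF e1] \<delta>_def opfps_diff_mult by simp
  qed
  have "fundamental_matrix r l \<alpha> d1 = M \<longleftrightarrow>
        (\<forall>i<r. \<forall>n<?N. (\<Sum>j<r. \<delta> j * (fps_deriv ^^ j) (p i)) $ n = 0)"
    unfolding fundamental_matrix_char[of l r \<alpha> d1 M, OF nzl rd M] p_def[symmetric]
    using eq nN by auto
  also have "\<dots> \<longleftrightarrow> (\<forall>j<r. \<forall>n<?N. \<delta> j $ n = 0)"
  proof
    assume "\<forall>i<r. \<forall>n<?N. (\<Sum>j<r. \<delta> j * (fps_deriv ^^ j) (p i)) $ n = 0"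
    then show "\<forall>j<r. \<forall>n<?N. \<delta> j $ n = 0"
      using tri_zero[of r p ?N \<delta>] P by blast
  next
    assume Z: "\<forall>j<r. \<forall>n<?N. \<delta> j $ n = 0"
    show "\<forall>i<r. \<forall>n<?N. (\<Sum>j<r. \<delta> j * (fps_deriv ^^ j) (p i)) $ n = 0"
    proof (intro allI impI)
      fix i n assume "i < r" "n < ?N"
      then show "(\<Sum>j<r. \<delta> j * (fps_deriv ^^ j) (p i)) $ n = 0"
        using Z by (intro sum_ops_low_zero) auto
    qed
  qed
  also have "\<dots> \<longleftrightarrow> (\<forall>j<r. [:- \<alpha>, 1:] ^ ?N dvd (l j - l r * E j))"
    unfolding \<delta>_def opfps_def fps_of_poly_nth shift_dvd[symmetric] by simp
  finally show ?thesis .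
qed

lemma fiber_char:
  fixes \<alpha> :: "nat \<Rightarrow> 'a::field_char_0"
  assumes M: "M \<in> fmat_power r (r * s) s" and rd: "r \<le> Suc (r * s)"
    and E: "E \<in> Vset r d \<alpha> s" "E r = 1" "phi_map r (r * s) \<alpha> s E = M"
    and l: "l \<in> Vset r d \<alpha> s"
  shows "phi_map r (r * s) \<alpha> s l = M \<longleftrightarrow>
    (\<forall>i<s. \<forall>j<r. [:- \<alpha> i, 1:] ^ (Suc (r * s) - r) dvd (l j - l r * E j))"
proof -
  have M': "(\<forall>i<s. M i \<in> fmat_space r (r * s)) \<and> (\<forall>i\<ge>s. M i = (\<lambda>_ _. 0))"
    using M unfolding fmat_power_def by (rule CollectD)
  have nzl: "poly (l r) (\<alpha> i) \<noteq> 0" if "i < s" for i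
    using l that unfolding Vset_def by blast
  have FE: "fundamental_matrix r E (\<alpha> i) (r * s) = M i" if "i < s" for i
    using fun_cong[OF E(3), of i] that by (simp add: phi_map_def)
  have "phi_map r (r * s) \<alpha> s l = M \<longleftrightarrow> (\<forall>i<s. fundamental_matrix r l (\<alpha> i) (r * s) = M i)"
  proof
    assume "phi_map r (r * s) \<alpha> s l = M"
    then show "\<forall>i<s. fundamental_matrix r l (\<alpha> i) (r * s) = M i"
      by (auto simp: phi_map_def)
  next
    assume A: "\<forall>i<s. fundamental_matrix r l (\<alpha> i) (r * s) = M i"
    show "phi_map r (r * s) \<alpha> s l = M"
    proof (rule ext)
      fix i show "phi_map r (r * s) \<alpha> s l i = M i"
        using A M' by (cases "i < s") (simp_all add: phi_map_def)
    qed
  qed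
  also have "\<dots> \<longleftrightarrow> (\<forall>i<s. \<forall>j<r. [:- \<alpha> i, 1:] ^ (Suc (r * s) - r) dvd (l j - l r * E j))"
  proof -
    have "fundamental_matrix r l (\<alpha> i) (r * s) = M i \<longleftrightarrow>
          (\<forall>j<r. [:- \<alpha> i, 1:] ^ (Suc (r * s) - r) dvd (l j - l r * E j))" if "i < s" for i
      using fm_fiber_local[of l r "\<alpha> i" E "r * s" "M i", OF nzl[OF that] E(2) rd] M' FE[OF that] that by blast
    then show ?thesis by blast
  qed
  finally show ?thesis .
qed

lemma op_coords_len: "length (op_coords r d l) = Suc r * Suc d"
  unfolding op_coords_def by (subst length_concat_map_upt[where w = "Suc d"]) auto

lemma op_coords_nth:
  assumes "k < Suc r * Suc d"
  shows "op_coords r d l ! k = coeff (l (k div Suc d)) (k mod Suc d)"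
  unfolding op_coords_def
  by (subst concat_map_upt_nth[where w = "Suc d"]) (use assms in \<open>simp_all del: upt_Suc\<close>)

lemma idx_facts:
  assumes "j \<le> r" "t \<le> d"
  shows "j * Suc d + t < Suc r * Suc d" "(j * Suc d + t) div Suc d = j" "(j * Suc d + t) mod Suc d = t"
proof -
  have "j * Suc d + t < j * Suc d + Suc d" using assms by simp
  also have "\<dots> = Suc j * Suc d" by simp
  also have "\<dots> \<le> Suc r * Suc d" using assms by (intro mult_le_mono1) simp
  finally show "j * Suc d + t < Suc r * Suc d" .
  have e: "j * Suc d + t = t + Suc d * j" by (simp only: add.commute mult.commute)
  have t: "t < Suc d" using assms by simp
  show "(j * Suc d + t) div Suc d = j" unfolding e using t div_mult_self2[of "Suc d" t j] by simp
  show "(j * Suc d + t) mod Suc d = t" unfolding e using t by (simp only: mod_mult_self2 mod_less)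
qed

definition decode :: "nat \<Rightarrow> nat \<Rightarrow> 'a::comm_ring_1 list \<Rightarrow> nat \<Rightarrow> 'a poly" where
  "decode r d xs = (\<lambda>j. if j \<le> r then (\<Sum>k\<le>d. monom (xs ! (j * Suc d + k)) k) else 0)"

lemma coeff_decode:
  "coeff (decode r d xs j) t = (if j \<le> r \<and> t \<le> d then xs ! (j * Suc d + t) else 0)"
  unfolding decode_def by (auto simp: coeff_sum coeff_monom)

lemma decode_op_coords:
  assumes "op_degree_le l d" "\<forall>j>r. l j = 0"
  shows "decode r d (op_coords r d l) = l"
proof (rule ext, rule poly_eqI)
  fix j t
  show "coeff (decode r d (op_coords r d l) j) t = coeff (l j) t"
  proof (cases "j \<le> r")
    case False then show ?thesis using assms(2) by (simp add: coeff_decode)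
  next
    case True
    show ?thesis
    proof (cases "t \<le> d")
      case True': True
      show ?thesis using idx_facts[OF True True'] True True'
        by (simp add: coeff_decode op_coords_nth)
    next
      case False
      have "degree (l j) \<le> d" using assms(1) by (simp add: op_degree_le_def)
      then have "coeff (l j) t = 0" using False by (intro coeff_eq_0) simp
      then show ?thesis using False by (simp add: coeff_decode)
    qed
  qed
qed

lemma op_coords_decode:
  assumes "length xs = Suc r * Suc d"
  shows "op_coords r d (decode r d xs) = xs"
proof (rule nth_equalityI)
  show "length (op_coords r d (decode r d xs)) = length xs" using assms by (simp add: op_coords_len)
  fix k assume "k < length (op_coords r d (decode r d xs))"
  then have k: "k < Suc r * Suc d" by (simp add: op_coords_len)
  have "k div Suc d < Suc r" using k by (simp add: less_mult_imp_div_less)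
  moreover have "k mod Suc d \<le> d" by (simp add: less_Suc_eq_le)
  moreover have "k div Suc d * Suc d + k mod Suc d = k" by (rule div_mult_mod_eq)
  ultimately show "op_coords r d (decode r d xs) ! k = xs ! k"
    using k by (simp only: op_coords_nth[OF k] coeff_decode less_Suc_eq_le if_True conj_absorb simp_thms)
qed

lemma decode_deg: "op_degree_le (decode r d xs) d"
  unfolding op_degree_le_def by (auto intro!: degree_le simp: coeff_decode)

lemma decode_zero: "\<forall>j>r. decode r d xs j = 0"
  by (simp add: decode_def)

lemma poly_mod_add:
  fixes x y Q :: "'a::field poly"
  assumes "Q \<noteq> 0"
  shows "(x + y) mod Q = x mod Q + y mod Q"
proof (cases "degree Q = 0")
  case True
  have z: "z mod Q = 0" for z using degree_mod_less[OF assms, of z] True by simp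
  show ?thesis by (simp add: z)
next
  case False
  have lt: "degree (z mod Q) < degree Q" for z using degree_mod_less[OF assms, of z] False by auto
  have "degree (x mod Q + y mod Q) < degree Q"
    using degree_add_le_max[of "x mod Q" "y mod Q"] lt[of x] lt[of y] by linarith
  then have "(x mod Q + y mod Q) mod Q = x mod Q + y mod Q" by (rule mod_poly_less)
  then show ?thesis by (simp add: mod_add_eq)
qed

lemma poly_mod_sum:
  fixes Q :: "'a::field poly"
  assumes "Q \<noteq> 0" "finite A"
  shows "(\<Sum>t\<in>A. f t) mod Q = (\<Sum>t\<in>A. f t mod Q)"
  using assms(2) by (induction A rule: finite_induct) (simp_all add: poly_mod_add[OF assms(1)])

lemma coeff_decode_mult_mod:
  fixes Q F :: "'a::field poly"
  assumes "Q \<noteq> 0"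
  shows "coeff ((decode r d xs r * F) mod Q) m =
         (\<Sum>t\<le>d. xs ! (r * Suc d + t) * coeff ((monom 1 t * F) mod Q) m)"
proof -
  have "decode r d xs r * F = (\<Sum>t\<le>d. smult (xs ! (r * Suc d + t)) (monom 1 t * F))"
    unfolding decode_def by (simp add: sum_distrib_right smult_monom_mult)
  then have "(decode r d xs r * F) mod Q = (\<Sum>t\<le>d. smult (xs ! (r * Suc d + t)) ((monom 1 t * F) mod Q))"
    by (simp add: poly_mod_sum[OF assms] mod_smult_left)
  then show ?thesis by (simp add: coeff_sum)
qed

lemma pf_coeff_decode_mult_mod:
  fixes Q F :: "'a::field poly"
  assumes "Q \<noteq> 0"
  shows "polyfun (Suc r * Suc d) (\<lambda>xs. coeff ((decode r d xs r * F) mod Q) m)"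
proof -
  have "polyfun (Suc r * Suc d) (\<lambda>xs. \<Sum>t\<in>{..d}. xs ! (r * Suc d + t) * coeff ((monom 1 t * F) mod Q) m)"
    by (intro pf_sum pf_mult pf_var pf_const) (auto intro: idx_facts(1))
  then show ?thesis by (simp only: coeff_decode_mult_mod[OF assms])
qed

section \<open>The transfer map between fibers\<close>

definition Tm :: "nat \<Rightarrow> 'a::field poly \<Rightarrow> (nat \<Rightarrow> 'a poly) \<Rightarrow> (nat \<Rightarrow> 'a poly) \<Rightarrow> (nat \<Rightarrow> 'a poly) \<Rightarrow> (nat \<Rightarrow> 'a poly)" where
  "Tm r Q E E' l = (\<lambda>j. if j < r then l j - (l r * E j) mod Q + (l r * E' j) mod Q else l j)"

lemma Tm_r[simp]: "Tm r Q E E' l r = l r"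
  by (simp add: Tm_def)

lemma Tm_inv: "Tm r Q E' E (Tm r Q E E' l) = l"
  by (rule ext) (simp add: Tm_def)

lemma degree_mod_le:
  fixes x Q :: "'a::field poly"
  assumes "Q \<noteq> 0"
  shows "degree (x mod Q) \<le> degree Q"
  using degree_mod_less[OF assms, of x] by auto

lemma Tm_deg:
  assumes "op_degree_le l d" "Q \<noteq> 0" "degree Q \<le> d"
  shows "op_degree_le (Tm r Q E E' l) d"
  unfolding op_degree_le_def
proof
  fix j
  have lj: "degree (l j) \<le> d" using assms(1) by (simp add: op_degree_le_def)
  have m: "degree (x mod Q) \<le> d" for x using degree_mod_le[OF assms(2), of x] assms(3) by linarith
  show "degree (Tm r Q E E' l j) \<le> d"
  proof (cases "j < r")
    case True
    have "degree (l j - (l r * E j) mod Q + (l r * E' j) mod Q) \<le> d"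
      by (intro degree_add_le degree_diff_le lj m)
    then show ?thesis using True by (simp add: Tm_def)
  qed (simp add: Tm_def lj)
qed

lemma Tm_zero: "\<forall>j>r. l j = 0 \<Longrightarrow> \<forall>j>r. Tm r Q E E' l j = 0"
  by (simp add: Tm_def)

lemma Tm_V:
  assumes "l \<in> Vset r d \<alpha> s" "Q \<noteq> 0" "degree Q \<le> d"
  shows "Tm r Q E E' l \<in> Vset r d \<alpha> s"
  using assms Tm_deg[of l d Q r E E'] unfolding Vset_def op_order_def
  by (auto simp: Tm_def)

lemma Tm_cond:
  fixes Q :: "'a::field poly"
  assumes "D dvd Q" "D dvd (l j - l r * E j)" "j < r"
  shows "D dvd (Tm r Q E E' l j - Tm r Q E E' l r * E' j)"
proof -
  have "Tm r Q E E' l j - Tm r Q E E' l r * E' j =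
        (l j - l r * E j) + (l r * E j - (l r * E j) mod Q) - (l r * E' j - (l r * E' j) mod Q)"
    using assms(3) by (simp add: Tm_def algebra_simps)
  also have "\<dots> = (l j - l r * E j) + Q * ((l r * E j) div Q) - Q * ((l r * E' j) div Q)"
    by (simp add: minus_mod_eq_mult_div)
  finally show ?thesis using assms(1,2)
    by (metis dvd_add dvd_diff dvd_mult2)
qed

lemma phi_in_power:
  fixes \<alpha> :: "nat \<Rightarrow> 'a::field_char_0"
  assumes "l \<in> Vset r d \<alpha> s" "r \<le> Suc (r * s)"
  shows "phi_map r (r * s) \<alpha> s l \<in> fmat_power r (r * s) s"
proof -
  have "poly (l r) (\<alpha> i) \<noteq> 0" if "i < s" for i using assms(1) that unfolding Vset_def by blast
  then have "fundamental_matrix r l (\<alpha> i) (r * s) \<in> fmat_space r (r * s)" if "i < s" for i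
    using fundamental_matrix_in[of l r "\<alpha> i" "r * s"] assms(2) that by blast
  then show ?thesis unfolding fmat_power_def phi_map_def by simp
qed

lemma coeff_Tm:
  "coeff (Tm r Q E E' l j) m = (if j < r then coeff (l j) m - coeff ((l r * E j) mod Q) m
      + coeff ((l r * E' j) mod Q) m else coeff (l j) m)"
  by (simp add: Tm_def)

lemma pf_tau:
  fixes Q :: "'a::field poly"
  assumes Q0: "Q \<noteq> 0" and i: "i < Suc r * Suc d"
  shows "polyfun (Suc r * Suc d) (\<lambda>xs. op_coords r d (Tm r Q E E' (decode r d xs)) ! i)"
proof -
  define j where "j = i div Suc d"
  define m where "m = i mod Suc d"
  have "i div Suc d < Suc r" using i by (rule less_mult_imp_div_less)
  then have jr: "j \<le> r" unfolding j_def by simp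
  have md: "m \<le> d" unfolding m_def by (simp add: less_Suc_eq_le)
  have im: "j * Suc d + m = i" unfolding j_def m_def by (rule div_mult_mod_eq)
  have cd: "coeff (decode r d xs j) m = xs ! i" for xs :: "'a list"
    using jr md im by (simp add: coeff_decode)
  have eq: "op_coords r d (Tm r Q E E' (decode r d xs)) ! i =
      (if j < r then xs ! i - coeff ((decode r d xs r * E j) mod Q) m
        + coeff ((decode r d xs r * E' j) mod Q) m else xs ! i)" for xs
    unfolding op_coords_nth[OF i] coeff_Tm j_def[symmetric] m_def[symmetric] cd by simp
  show ?thesis
  proof (cases "j < r")
    case True
    have "polyfun (Suc r * Suc d) (\<lambda>xs. xs ! i - coeff ((decode r d xs r * E j) mod Q) m
        + coeff ((decode r d xs r * E' j) mod Q) m)"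
      by (intro pf_add pf_diff pf_var pf_coeff_decode_mult_mod Q0 i)
    then show ?thesis unfolding eq using True by simp
  next
    case False
    have "polyfun (Suc r * Suc d) (\<lambda>xs. xs ! i)" by (rule pf_var[OF i])
    then show ?thesis unfolding eq using False by simp
  qed
qed

lemma Tm_maps:
  fixes \<alpha> :: "nat \<Rightarrow> 'a::field_char_0"
  assumes rd: "r \<le> Suc (r * s)"
    and M: "M \<in> fmat_power r (r * s) s" and M': "M' \<in> fmat_power r (r * s) s"
    and E: "E \<in> Vset r d \<alpha> s" "E r = 1" "phi_map r (r * s) \<alpha> s E = M"
    and E': "E' \<in> Vset r d \<alpha> s" "E' r = 1" "phi_map r (r * s) \<alpha> s E' = M'"
    and Q: "Q \<noteq> 0" "degree Q \<le> d" "\<And>i. i < s \<Longrightarrow> [:- \<alpha> i, 1:] ^ (Suc (r * s) - r) dvd Q"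
    and l: "l \<in> Vset r d \<alpha> s" "phi_map r (r * s) \<alpha> s l = M"
  shows "Tm r Q E E' l \<in> Vset r d \<alpha> s \<and> phi_map r (r * s) \<alpha> s (Tm r Q E E' l) = M'"
proof
  show TV: "Tm r Q E E' l \<in> Vset r d \<alpha> s" by (rule Tm_V[OF l(1) Q(1,2)])
  have c: "\<forall>i<s. \<forall>j<r. [:- \<alpha> i, 1:] ^ (Suc (r * s) - r) dvd (l j - l r * E j)"
    using fiber_char[OF M rd E l(1)] l(2) by blast
  have "\<forall>i<s. \<forall>j<r. [:- \<alpha> i, 1:] ^ (Suc (r * s) - r) dvd
      (Tm r Q E E' l j - Tm r Q E E' l r * E' j)"
    using c Tm_cond[OF Q(3)] by blast
  then show "phi_map r (r * s) \<alpha> s (Tm r Q E E' l) = M'"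
    using fiber_char[OF M' rd E' TV] by blast
qed

lemma fibers_zdim:
  fixes \<alpha> :: "nat \<Rightarrow> 'a::field_char_0"
  assumes inj: "inj_on \<alpha> {..<s}" and s0: "0 < s" and sN: "s * (Suc (r * s) - r) \<le> d"
    and M: "M \<in> phi_map r (r * s) \<alpha> s ` Vset r d \<alpha> s"
    and M': "M' \<in> phi_map r (r * s) \<alpha> s ` Vset r d \<alpha> s"
  shows "zdim (Suc r * Suc d) (op_coords r d ` {l \<in> Vset r d \<alpha> s. phi_map r (r * s) \<alpha> s l = M}) =
         zdim (Suc r * Suc d) (op_coords r d ` {l \<in> Vset r d \<alpha> s. phi_map r (r * s) \<alpha> s l = M'})"
proof -
  let ?V = "Vset r d \<alpha> s" and ?\<phi> = "phi_map r (r * s) \<alpha> s" and ?n = "Suc r * Suc d"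
  let ?N = "Suc (r * s) - r"
  have rs: "r * 1 \<le> r * s" using s0 by (intro mult_le_mono2) simp
  have rd: "r \<le> Suc (r * s)" using rs by linarith
  have Mp: "M \<in> fmat_power r (r * s) s" using M phi_in_power[OF _ rd] by blast
  have Mp': "M' \<in> fmat_power r (r * s) s" using M' phi_in_power[OF _ rd] by blast
  obtain E where E: "E \<in> ?V" "E r = 1" "?\<phi> E = M" using surj_construct[OF inj Mp sN s0] by blast
  obtain E' where E': "E' \<in> ?V" "E' r = 1" "?\<phi> E' = M'" using surj_construct[OF inj Mp' sN s0] by blast
  define Q where "Q = (\<Prod>i<s. [:- \<alpha> i, 1:] ^ ?N)"
  have Q0: "Q \<noteq> 0" unfolding Q_def by auto
  have Qd: "degree Q \<le> d" unfolding Q_def degree_lin_prod using sN .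
  have Qi: "[:- \<alpha> i, 1:] ^ ?N dvd Q" if "i < s" for i unfolding Q_def using that by (intro dvd_prodI) auto
  define F where "F X = {l \<in> ?V. ?\<phi> l = X}" for X
  have TF: "Tm r Q E E' l \<in> F M'" if "l \<in> F M" for l
    using Tm_maps[OF rd Mp Mp' E E' Q0 Qd Qi] that unfolding F_def by blast
  have TF': "Tm r Q E' E l \<in> F M" if "l \<in> F M'" for l
    using Tm_maps[OF rd Mp' Mp E' E Q0 Qd Qi] that unfolding F_def by blast
  have img: "Tm r Q E E' ` F M = F M'"
  proof
    show "Tm r Q E E' ` F M \<subseteq> F M'" using TF by blast
    show "F M' \<subseteq> Tm r Q E E' ` F M"
    proof
      fix l' assume "l' \<in> F M'"
      then have "Tm r Q E' E l' \<in> F M" "Tm r Q E E' (Tm r Q E' E l') = l'" using TF' Tm_inv by auto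
      then show "l' \<in> Tm r Q E E' ` F M" by (metis image_eqI)
    qed
  qed
  define \<tau> where "\<tau> xs = op_coords r d (Tm r Q E E' (decode r d xs))" for xs
  define \<rho> where "\<rho> xs = op_coords r d (Tm r Q E' E (decode r d xs))" for xs
  have VD: "op_degree_le l d \<and> (\<forall>j>r. l j = 0)" if "l \<in> ?V" for l
    using that unfolding Vset_def op_order_def by blast
  have bk2: "decode r d (op_coords r d (Tm r Q A B (decode r d xs))) = Tm r Q A B (decode r d xs)" for A B xs
    by (rule decode_op_coords) (simp_all add: Tm_deg[OF decode_deg Q0 Qd] Tm_zero[OF decode_zero])
  have Asp: "xs \<in> affine_space ?n \<longleftrightarrow> length xs = ?n" for xs by (simp add: affine_space_def)
  have "zdim ?n (op_coords r d ` F M) = zdim ?n (\<tau> ` op_coords r d ` F M)"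
  proof (rule zdim_iso)
    show "op_coords r d ` F M \<subseteq> affine_space ?n" by (auto simp: affine_space_def op_coords_len)
    show "\<tau> xs \<in> affine_space ?n" for xs by (simp add: affine_space_def \<tau>_def op_coords_len)
    show "\<rho> xs \<in> affine_space ?n" for xs by (simp add: affine_space_def \<rho>_def op_coords_len)
    show "\<rho> (\<tau> xs) = xs" if "xs \<in> affine_space ?n" for xs
      unfolding \<rho>_def \<tau>_def bk2 Tm_inv using that by (simp add: affine_space_def op_coords_decode)
    show "\<tau> (\<rho> xs) = xs" if "xs \<in> affine_space ?n" for xs
      unfolding \<rho>_def \<tau>_def bk2 Tm_inv using that by (simp add: affine_space_def op_coords_decode)
    show "polyfun ?n (\<lambda>xs. \<rho> xs ! i)" if "i < ?n" for i
      unfolding \<rho>_def by (rule pf_tau[OF Q0 that])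
    show "polyfun ?n (\<lambda>xs. \<tau> xs ! i)" if "i < ?n" for i
      unfolding \<tau>_def by (rule pf_tau[OF Q0 that])
  qed
  also have "\<tau> ` op_coords r d ` F M = op_coords r d ` F M'"
  proof -
    have "\<tau> ` op_coords r d ` F M = op_coords r d ` Tm r Q E E' ` F M"
      unfolding image_image
    proof (rule image_cong[OF refl])
      fix l assume "l \<in> F M"
      then have "l \<in> ?V" unfolding F_def by blast
      then have "decode r d (op_coords r d l) = l" using VD decode_op_coords by blast
      then show "\<tau> (op_coords r d l) = op_coords r d (Tm r Q E E' l)" unfolding \<tau>_def by simp
    qed
    then show ?thesis unfolding img .
  qed
  finally show ?thesis unfolding F_def .
qed

lemma pcompose_monom: "pcompose (monom c t) q = smult c (q ^ t)"
  by (simp add: monom_altdef pcompose_smult pcompose_power pcompose_pCons)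

lemma coeff_opfps_coords:
  fixes y :: "nat \<Rightarrow> 'a::field_char_0 poly"
  assumes "op_degree_le y d" "\<forall>j>r. y j = 0" "j \<le> r"
  shows "opfps y \<alpha> j $ k = (\<Sum>t\<le>d. op_coords r d y ! (j * Suc d + t) * coeff ([:\<alpha>, 1:] ^ t) k)"
proof -
  have "y j = decode r d (op_coords r d y) j" using decode_op_coords[OF assms(1,2)] by simp
  also have "\<dots> = (\<Sum>t\<le>d. monom (op_coords r d y ! (j * Suc d + t)) t)"
    using assms(3) by (simp add: decode_def)
  finally have yj: "y j = (\<Sum>t\<le>d. monom (op_coords r d y ! (j * Suc d + t)) t)" .
  show ?thesis unfolding opfps_def fps_of_poly_nth yj
    by (simp add: pcompose_sum pcompose_monom coeff_sum)
qed

lemma rf_opfps: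
  fixes X :: "(nat \<Rightarrow> 'a::field_char_0 poly) set"
  assumes X: "\<And>y. y \<in> X \<Longrightarrow> op_degree_le y d \<and> (\<forall>j>r. y j = 0)" and j: "j \<le> r"
  shows "ratfun (Suc r * Suc d) (op_coords r d) X (\<lambda>y. opfps y \<alpha> j $ k)"
proof -
  have "polyfun (Suc r * Suc d) (\<lambda>xs. \<Sum>t\<in>{..d}. xs ! (j * Suc d + t) * coeff ([:\<alpha>, 1:] ^ t) k)"
  proof (intro pf_sum pf_mult pf_var pf_const)
    fix t assume "t \<in> {..d}"
    then show "j * Suc d + t < Suc r * Suc d" using idx_facts(1)[OF j, of t] by simp
  qed simp
  from rf_poly[OF this, of "op_coords r d" X] show ?thesis
  proof (rule rf_cong)
    fix y assume "y \<in> X"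
    then show "(\<Sum>t\<in>{..d}. op_coords r d y ! (j * Suc d + t) * coeff ([:\<alpha>, 1:] ^ t) k) = opfps y \<alpha> j $ k"
      using coeff_opfps_coords[OF _ _ j, of y d \<alpha> k] X by simp
  qed
qed

lemma rf_sol:
  fixes X :: "(nat \<Rightarrow> 'a::field_char_0 poly) set"
  assumes X: "\<And>y. y \<in> X \<Longrightarrow> op_degree_le y d \<and> (\<forall>j>r. y j = 0)"
    and nz: "\<And>y. y \<in> X \<Longrightarrow> poly (y r) \<alpha> \<noteq> 0"
  shows "ratfun (Suc r * Suc d) (op_coords r d) X (\<lambda>y. sol r (opfps y \<alpha>) v $ m)"
proof (induction m rule: less_induct)
  case (less m)
  let ?R = "ratfun (Suc r * Suc d) (op_coords r d) X"
  show ?case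
  proof (cases "m < r")
    case True
    then show ?thesis by (simp add: sol_init rf_const)
  next
    case False
    define n where "n = m - r"
    have mn: "m = n + r" using False by (simp add: n_def)
    have rest: "?R (\<lambda>y. rest r (opfps y \<alpha>) (sol r (opfps y \<alpha>) v) n)"
      unfolding rest_def
    proof (intro rf_sum finite_atMost)
      fix j k assume jk: "j \<in> {..r}" "k \<in> {..n}"
      show "?R (\<lambda>y. if j = r \<and> k = 0 then 0 else opfps y \<alpha> j $ k *
               (pochhammer (of_nat (n - k + 1)) j * sol r (opfps y \<alpha>) v $ (n - k + j)))"
      proof (cases "j = r \<and> k = 0")
        case True then show ?thesis by (simp add: rf_const)
      next
        case False
        note nc = False
        then have "n - k + j < m" using jk mn by auto
        then have "?R (\<lambda>y. opfps y \<alpha> j $ k * (pochhammer (of_nat (n - k + 1)) j * sol r (opfps y \<alpha>) v $ (n - k + j)))"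
          using jk by (intro rf_mult rf_const rf_opfps[OF X] less.IH) auto
        then show ?thesis by (simp only: nc if_False)
      qed
    qed
    have den: "?R (\<lambda>y. opfps y \<alpha> r $ 0 * pochhammer (of_nat (m - r + 1)) r)"
      by (intro rf_mult rf_const rf_opfps[OF X]) auto
    have "?R (\<lambda>y. ((- 1) * rest r (opfps y \<alpha>) (sol r (opfps y \<alpha>) v) n) /
                  (opfps y \<alpha> r $ 0 * pochhammer (of_nat (m - r + 1)) r))"
    proof (rule rf_div)
      show "?R (\<lambda>y. (- 1) * rest r (opfps y \<alpha>) (sol r (opfps y \<alpha>) v) n)"
        by (intro rf_mult rf_const rest)
      show "?R (\<lambda>y. opfps y \<alpha> r $ 0 * pochhammer (of_nat (m - r + 1)) r)" by (rule den)
      fix y assume "y \<in> X"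
      moreover have "pochhammer (of_nat (m - r + 1)) r \<noteq> (0::'a)" by (rule poch_nz)
      ultimately show "opfps y \<alpha> r $ 0 * pochhammer (of_nat (m - r + 1)) r \<noteq> 0"
        using nz by (simp add: opfps_0)
    qed
    then show ?thesis
    proof (rule rf_cong)
      fix y assume "y \<in> X"
      show "(- 1) * rest r (opfps y \<alpha>) (sol r (opfps y \<alpha>) v) n /
                  (opfps y \<alpha> r $ 0 * pochhammer (of_nat (m - r + 1)) r) = sol r (opfps y \<alpha>) v $ m"
        by (subst sol_nth[of r _ v m]) (use False in \<open>simp add: n_def\<close>)
    qed
  qed
qed

lemma fpc_inner_len:
  "length (concat (map (\<lambda>a. map (\<lambda>b. Ms i a b) [r..<Suc d1]) [0..<r])) = r * (Suc d1 - r)"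
  by (subst length_concat_map_upt[where w = "Suc d1 - r"]) (auto simp del: upt_Suc)

lemma fpc_len: "length (fmat_power_coords r d1 s Ms) = s * (r * (Suc d1 - r))"
  unfolding fmat_power_coords_def
  by (subst length_concat_map_upt[where w = "r * (Suc d1 - r)"]) (auto simp: fpc_inner_len simp del: upt_Suc)

lemma fpc_nth:
  assumes k: "k < s * (r * (Suc d1 - r))"
  shows "fmat_power_coords r d1 s Ms ! k =
    Ms (k div (r * (Suc d1 - r))) ((k mod (r * (Suc d1 - r))) div (Suc d1 - r))
       (r + (k mod (r * (Suc d1 - r))) mod (Suc d1 - r))"
proof -
  let ?w = "Suc d1 - r"
  have W0: "0 < r * ?w" using k by (cases "r * ?w = 0") auto
  then have w0: "0 < ?w" by simp
  have km: "k mod (r * ?w) < r * ?w" using W0 by simp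
  have "fmat_power_coords r d1 s Ms ! k =
      concat (map (\<lambda>a. map (\<lambda>b. Ms (k div (r * ?w)) a b) [r..<Suc d1]) [0..<r]) ! (k mod (r * ?w))"
    unfolding fmat_power_coords_def
    by (subst concat_map_upt_nth[where w = "r * ?w"]) (use k in \<open>simp_all add: fpc_inner_len del: upt_Suc\<close>)
  also have "\<dots> = map (\<lambda>b. Ms (k div (r * ?w)) ((k mod (r * ?w)) div ?w) b) [r..<Suc d1] ! ((k mod (r * ?w)) mod ?w)"
    by (subst concat_map_upt_nth[where w = "?w"]) (use km in \<open>simp_all add: mult.commute Suc_diff_le\<close>)
  also have "\<dots> = Ms (k div (r * ?w)) ((k mod (r * ?w)) div ?w) (r + (k mod (r * ?w)) mod ?w)"
  proof -
    have "(k mod (r * ?w)) mod ?w < ?w" using w0 by simp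
    then have "r + (k mod (r * ?w)) mod ?w < Suc d1" by linarith
    then show ?thesis using w0 by (simp add: nth_upt del: upt_Suc)
  qed
  finally show ?thesis .
qed

lemma zopen_univ: "zariski_open n (affine_space n :: 'a::comm_ring_1 list set)"
  unfolding zariski_open_def zariski_closed_def
proof (intro conjI subset_refl exI[of _ "{\<lambda>_. 1}"])
  show "\<forall>f\<in>{\<lambda>_. 1}. polyfun n (f :: 'a list \<Rightarrow> 'a)" by (simp add: pf_const)
  show "affine_space n - affine_space n = {xs \<in> affine_space n. \<forall>f\<in>{\<lambda>_. 1}. f xs = (0::'a)}" by simp
qed

lemma regular_phi:
  fixes \<alpha> :: "nat \<Rightarrow> 'a::field_char_0"
  assumes s0: "0 < s"
  shows "regular_map (Suc r * Suc d) (s * (r * (r * s + 1 - r))) (op_coords r d) (Vset r d \<alpha> s)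
           (\<lambda>l. fmat_power_coords r (r * s) s (phi_map r (r * s) \<alpha> s l))"
proof -
  let ?V = "Vset r d \<alpha> s" and ?n = "Suc r * Suc d" and ?m = "s * (r * (r * s + 1 - r))"
  let ?h = "\<lambda>l. fmat_power_coords r (r * s) s (phi_map r (r * s) \<alpha> s l)"
  let ?w = "Suc (r * s) - r"
  have rs: "r * 1 \<le> r * s" using s0 by (intro mult_le_mono2) simp
  have rd: "r \<le> Suc (r * s)" using rs by linarith
  have mw: "?m = s * (r * ?w)" by simp
  have VD: "op_degree_le l d \<and> (\<forall>j>r. l j = 0)" if "l \<in> ?V" for l
    using that unfolding Vset_def op_order_def by blast
  have nzV: "poly (l r) (\<alpha> i) \<noteq> 0" if "l \<in> ?V" "i < s" for l i
    using that unfolding Vset_def by blast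
  have inj: "inj_on (op_coords r d) ?V"
  proof (rule inj_onI)
    fix l l' assume "l \<in> ?V" "l' \<in> ?V" "op_coords r d l = op_coords r d l'"
    then show "l = l'" using VD decode_op_coords by metis
  qed
  have rf: "ratfun ?n (op_coords r d) ?V (\<lambda>y. ?h y ! k)" if k: "k < ?m" for k
  proof -
    define i where "i = k div (r * ?w)"
    define a where "a = (k mod (r * ?w)) div ?w"
    define b where "b = (k mod (r * ?w)) mod ?w"
    have k': "k < s * (r * ?w)" using k mw by simp
    have W0: "0 < r * ?w" using k' by (cases "r * ?w = 0") auto
    then have w0: "0 < ?w" by simp
    have i: "i < s" unfolding i_def using k' by (simp add: less_mult_imp_div_less)
    have "k mod (r * ?w) < r * ?w" using W0 by simp
    then have a: "a < r" unfolding a_def by (simp add: less_mult_imp_div_less)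
    have b: "b < ?w" unfolding b_def using w0 by simp
    have rb: "r + b \<le> r * s" using b by simp
    have eq: "?h y ! k = sol r (opfps y (\<alpha> i)) (evec a) $ (r + b)" if "y \<in> ?V" for y
    proof -
      have "?h y ! k = phi_map r (r * s) \<alpha> s y i a (r + b)"
        unfolding fpc_nth[OF k'] i_def a_def b_def by simp
      also have "\<dots> = fundamental_matrix r y (\<alpha> i) (r * s) a (r + b)"
        using i by (simp add: phi_map_def)
      also have "\<dots> = sol r (opfps y (\<alpha> i)) (evec a) $ (r + b)"
        using fundamental_matrix_eq[of y r "\<alpha> i" "r * s", OF nzV[OF that i] rd] a rb
        by (simp add: fm_cand_def)
      finally show ?thesis .
    qed
    have "ratfun ?n (op_coords r d) ?V (\<lambda>y. sol r (opfps y (\<alpha> i)) (evec a) $ (r + b))"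
      by (rule rf_sol) (use VD nzV i in auto)
    then show ?thesis by (rule rf_cong) (simp add: eq)
  qed
  show ?thesis
    unfolding regular_map_def
  proof (intro conjI ballI allI impI)
    show "inj_on (op_coords r d) ?V" by (rule inj)
    show "op_coords r d ` ?V \<subseteq> affine_space ?n" by (auto simp: affine_space_def op_coords_len)
    show "?h ` ?V \<subseteq> affine_space ?m" by (auto simp: affine_space_def fpc_len)
    fix x k assume x: "x \<in> ?V" and k: "k < ?m"
    obtain p q where pq: "polyfun ?n p" "polyfun ?n q"
      "\<forall>y\<in>?V. q (op_coords r d y) \<noteq> 0 \<and> ?h y ! k = p (op_coords r d y) / q (op_coords r d y)"
      using rf[OF k] unfolding ratfun_def by blast
    show "\<exists>U p q. zariski_open ?n U \<and> op_coords r d x \<in> U \<and> polyfun ?n p \<and> polyfun ?n q \<and>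
        (\<forall>y\<in>?V. op_coords r d y \<in> U \<longrightarrow> q (op_coords r d y) \<noteq> 0 \<and> ?h y ! k = p (op_coords r d y) / q (op_coords r d y))"
      by (intro exI[of _ "affine_space ?n"] exI[of _ p] exI[of _ q] conjI zopen_univ pq(1,2))
         (use pq(3) in \<open>auto simp: affine_space_def op_coords_len\<close>)
  qed
qed

lemma prod_roots_dvd:
  fixes g :: "nat \<Rightarrow> 'a::idom" and p :: "'a poly"
  assumes "finite A" "inj_on g A" "\<forall>i\<in>A. poly p (g i) = 0"
  shows "(\<Prod>i\<in>A. [:- g i, 1:]) dvd p"
  using assms
proof (induction A rule: finite_induct)
  case empty then show ?case by simp
next
  case (insert x F)
  then have IH: "(\<Prod>i\<in>F. [:- g i, 1:]) dvd p" by auto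
  then obtain w where w: "p = (\<Prod>i\<in>F. [:- g i, 1:]) * w" by (elim dvdE)
  have nz: "poly (\<Prod>i\<in>F. [:- g i, 1:]) (g x) \<noteq> 0"
  proof -
    have "g x \<noteq> g i" if "i \<in> F" for i using insert.prems(1) insert.hyps(2) that by (auto dest: inj_onD)
    then show ?thesis by (simp add: poly_prod insert.hyps(1))
  qed
  have "poly p (g x) = 0" using insert.prems(2) by simp
  then have "poly w (g x) = 0" using nz w by simp
  then have "[:- g x, 1:] dvd w" by (simp add: poly_eq_0_iff_dvd)
  then have "[:- g x, 1:] * (\<Prod>i\<in>F. [:- g i, 1:]) dvd w * (\<Prod>i\<in>F. [:- g i, 1:])"
    by (intro mult_dvd_mono dvd_refl)
  then show ?case unfolding prod.insert[OF insert.hyps] w by (simp only: mult.commute)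
qed

definition h0 :: "'a::field_char_0 fps poly \<Rightarrow> 'a poly" where
  "h0 Q = map_poly (\<lambda>f. f $ 0) Q"

lemma h0_mult: "h0 (p * q) = h0 p * h0 q"
proof (rule poly_eqI)
  fix n
  show "coeff (h0 (p * q)) n = coeff (h0 p * h0 q) n"
    unfolding h0_def by (simp add: coeff_map_poly coeff_mult fps_sum_nth)
qed

lemma h0_prod: "finite A \<Longrightarrow> h0 (\<Prod>i\<in>A. f i) = (\<Prod>i\<in>A. h0 (f i))"
proof (induction A rule: finite_induct)
  case empty then show ?case by (simp add: h0_def)
next
  case (insert x F) then show ?case by (simp add: h0_mult)
qed

lemma h0_lin: "h0 [:- a, 1:] = [:- (a $ 0), 1:]"
  by (simp add: h0_def map_poly_pCons)

lemma eval_bivar_poly: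
  fixes P :: "'a::field_char_0 poly poly"
  shows "eval_bivar_fps P h = poly (map_poly fps_of_poly P) h"
proof -
  have deg: "degree (map_poly fps_of_poly P) = degree P"
    by (rule degree_map_poly) simp
  show ?thesis unfolding eval_bivar_fps_def poly_altdef deg
    by (simp add: coeff_map_poly)
qed

lemma h0_P: "h0 (map_poly fps_of_poly P) = map_poly (\<lambda>c. poly c 0) P"
  unfolding h0_def by (rule poly_eqI) (simp add: coeff_map_poly poly_0_coeff_0)

lemma alpha_distinct:
  fixes P :: "'a::field_char_0 poly poly" and g :: "nat \<Rightarrow> 'a fps"
  assumes sqf: "squarefree (map_poly (\<lambda>c. poly c 0) P)"
    and roots: "\<forall>i<degree P. eval_bivar_fps P (g i) = 0"
    and ginj: "inj_on g {..<degree P}"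
  shows "inj_on (\<lambda>i. g i $ 0) {..<degree P}"
proof (rule inj_onI, rule ccontr)
  fix i j assume i: "i \<in> {..<degree P}" and j: "j \<in> {..<degree P}" and eq: "g i $ 0 = g j $ 0" and ne: "i \<noteq> j"
  let ?P' = "map_poly fps_of_poly P"
  let ?A = "{..<degree P}"
  have "(\<Prod>k\<in>?A. [:- g k, 1:]) dvd ?P'"
    by (rule prod_roots_dvd) (use ginj roots in \<open>auto simp: eval_bivar_poly\<close>)
  then have "h0 (\<Prod>k\<in>?A. [:- g k, 1:]) dvd h0 ?P'"
    by (metis dvdE dvdI h0_mult)
  then have d1: "(\<Prod>k\<in>?A. [:- (g k $ 0), 1:]) dvd map_poly (\<lambda>c. poly c 0) P"
    by (simp add: h0_prod h0_lin h0_P)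
  define L where "L k = [:- (g k $ 0), 1:]" for k
  define R where "R = (\<Prod>k\<in>?A - {i} - {j}. L k)"
  have "(\<Prod>k\<in>?A. L k) = L i * (\<Prod>k\<in>?A - {i}. L k)"
    using i by (simp add: prod.remove)
  also have "(\<Prod>k\<in>?A - {i}. L k) = L j * R"
    unfolding R_def using j ne by (subst prod.remove[of _ j]) auto
  finally have "(\<Prod>k\<in>?A. L k) = L i * (L j * R)" .
  moreover have "L i = L j" unfolding L_def using eq by simp
  ultimately have "(\<Prod>k\<in>?A. L k) = L i ^ 2 * R"
    by (simp only: power2_eq_square mult.assoc)
  then have "[:- (g i $ 0), 1:] ^ 2 dvd (\<Prod>k\<in>?A. [:- (g k $ 0), 1:])"
    unfolding L_def by (metis dvd_triv_left)
  then have "[:- (g i $ 0), 1:] ^ 2 dvd map_poly (\<lambda>c. poly c 0) P" using d1 dvd_trans by blast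
  then have "is_unit [:- (g i $ 0), 1:]" using sqf unfolding squarefree_def by blast
  then show False by (simp add: is_unit_poly_iff)
qed

theorem proposition19:
  fixes C :: "'a::field_char_0 set"
    and P :: "'a poly poly"
    and g :: "nat \<Rightarrow> 'a fps"
    and r_L d_L :: nat
  assumes alg_closed: "\<forall>p :: 'a poly. degree p \<noteq> 0 \<longrightarrow> (\<exists>z. poly p z = 0)"
    and subfield: "is_subfield C"
    and closure: "algebraic_over C"
    and P_in_C: "\<forall>k m. coeff (coeff P k) m \<in> C"
    and rP: "degree P > 1"
    and P0_deg: "degree (map_poly (\<lambda>c. poly c 0) P) = degree P"
    and P0_sqf: "squarefree (map_poly (\<lambda>c. poly c 0) P)"
    and g_roots: "\<forall>i<degree P. eval_bivar_fps P (g i) = 0"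
    and g_inj: "inj_on g {..<degree P}"
    and g_all: "\<forall>h. eval_bivar_fps P h = 0 \<longrightarrow> h \<in> g ` {..<degree P}"
    and dL: "d_L \<ge> (r_L * degree P - r_L + 1) * degree P"
  defines "r_P \<equiv> degree P"
    and "\<alpha> \<equiv> (\<lambda>i. fps_nth (g i) 0)"
    and "V \<equiv> {l. op_order l r_L \<and> op_degree_le l d_L \<and> (\<forall>i<degree P. poly (l r_L) (fps_nth (g i) 0) \<noteq> 0)}"
    and "\<phi> \<equiv> phi_map r_L (r_L * degree P) (\<lambda>i. fps_nth (g i) 0) (degree P)"
  shows "regular_map ((Suc r_L) * (Suc d_L)) (r_P * (r_L * (r_L * r_P + 1 - r_L)))
           (op_coords r_L d_L) V (\<lambda>l. fmat_power_coords r_L (r_L * r_P) r_P (\<phi> l))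
       \<and> \<phi> ` V = fmat_power r_L (r_L * r_P) r_P
       \<and> (\<exists>D. \<forall>M\<in>\<phi> ` V. zdim ((Suc r_L) * (Suc d_L)) (op_coords r_L d_L ` {l\<in>V. \<phi> l = M}) = D)"
proof -
  let ?s = "degree P"
  let ?a = "\<lambda>i. fps_nth (g i) 0"
  have s0: "0 < ?s" using rP by simp
  have inj: "inj_on ?a {..<?s}" by (rule alpha_distinct[OF P0_sqf g_roots g_inj])
  have rs: "r_L * 1 \<le> r_L * ?s" using s0 by (intro mult_le_mono2) simp
  have rd: "r_L \<le> Suc (r_L * ?s)" using rs by linarith
  have "r_L \<le> r_L * ?s" using rs by linarith
  then have "Suc (r_L * ?s) - r_L = r_L * ?s - r_L + 1" by (simp add: Suc_diff_le)
  then have sN: "?s * (Suc (r_L * ?s) - r_L) \<le> d_L" using dL by (simp add: mult.commute)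
  have Veq: "V = Vset r_L d_L ?a ?s" unfolding V_def Vset_def ..
  have R: "regular_map ((Suc r_L) * (Suc d_L)) (r_P * (r_L * (r_L * r_P + 1 - r_L)))
           (op_coords r_L d_L) V (\<lambda>l. fmat_power_coords r_L (r_L * r_P) r_P (\<phi> l))"
    unfolding Veq \<phi>_def r_P_def by (rule regular_phi[OF s0])
  have S: "\<phi> ` V = fmat_power r_L (r_L * r_P) r_P"
  proof
    show "\<phi> ` V \<subseteq> fmat_power r_L (r_L * r_P) r_P"
      unfolding Veq \<phi>_def r_P_def using phi_in_power[OF _ rd] by blast
    show "fmat_power r_L (r_L * r_P) r_P \<subseteq> \<phi> ` V"
    proof
      fix M :: "nat \<Rightarrow> nat \<Rightarrow> nat \<Rightarrow> 'a" assume "M \<in> fmat_power r_L (r_L * r_P) r_P"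
      then have "M \<in> fmat_power r_L (r_L * ?s) ?s" unfolding r_P_def .
      then obtain l where "l \<in> Vset r_L d_L ?a ?s" "phi_map r_L (r_L * ?s) ?a ?s l = M"
        using surj_construct[OF inj _ sN s0] by blast
      then show "M \<in> \<phi> ` V" unfolding Veq \<phi>_def by blast
    qed
  qed
  have D: "\<exists>D. \<forall>M\<in>\<phi> ` V. zdim ((Suc r_L) * (Suc d_L)) (op_coords r_L d_L ` {l\<in>V. \<phi> l = M}) = D"
  proof (cases "V = {}")
    case True then show ?thesis by simp
  next
    case False
    then obtain l0 where l0: "l0 \<in> V" by blast
    show ?thesis
    proof (intro exI ballI)
      fix M assume M: "M \<in> \<phi> ` V"
      have "\<phi> l0 \<in> \<phi> ` V" using l0 by blast
      then show "zdim ((Suc r_L) * (Suc d_L)) (op_coords r_L d_L ` {l\<in>V. \<phi> l = M}) =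
                 zdim ((Suc r_L) * (Suc d_L)) (op_coords r_L d_L ` {l\<in>V. \<phi> l = \<phi> l0})"
        using fibers_zdim[OF inj s0 sN, of M "\<phi> l0"] M unfolding Veq \<phi>_def by blast
    qed
  qed
  show ?thesis using R S D by blast
qed

end
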